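(* For every real $x\ge 1$, $$\frac{\log x}{\zeta(2)}+1-\frac{\log 2}{\zeta(2)}\;<\;\sum_{n\le x}\frac{\varphi(n)}{n^2}\;\le\;\frac{\log x}{\zeta(2)}+1 .$$
   Context: $\varphi$ is Euler's totient function, $\zeta$ is the Riemann zeta function, $\log$ is the natural logarithm, and the sum runs over positive integers $n\le x$. *)

theory Defs
  imports "HOL-Analysis.Analysis" "HOL-Number_Theory.Number_Theory"
begin

definition zeta2 :: real where
  "zeta2 = (\<Sum>n. 1 / (real (Suc n))^2)"

end

theory Submission
  imports Defs
begin



lemma ln_upper_pade:
  fixes x :: real assumes x: "0 \<le> x"
  shows "ln (1 + x) \<le> x * (6 + x) / (6 + 4 * x)"
proof -
  define f where "f t = t * (6 + t) / (6 + 4 * t) - ln (1 + t)" for t :: real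
  have "f 0 \<le> f x"
  proof (rule DERIV_nonneg_imp_nondecreasing[OF x])
    fix t :: real assume t0: "0 \<le> t" and "t \<le> x"
    have d: "DERIV f t :> ((6 + 2*t) * (6 + 4*t) - t*(6+t)*4) / (6+4*t)^2 - 1/(1+t)"
      unfolding f_def using t0
      by (auto intro!: derivative_eq_intros simp: power2_eq_square)
    have "(36 + 12*t + 4*t^2) * (1+t) - (6+4*t)^2 = 4 * t^3"
      by (simp add: algebra_simps power2_eq_square power3_eq_cube)
    moreover have "4*t^3 \<ge> 0" using t0 by simp
    ultimately have "(36 + 12*t + 4*t^2) * (1+t) \<ge> (6+4*t)^2" by linarith
    hence "(6+4*t)^2 / (1+t) \<le> (36 + 12*t + 4*t^2)" using t0
      by (simp add: pos_divide_le_eq)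
    moreover have "(0::real) < (6+4*t)^2" using t0 by (simp add: add_pos_nonneg)
    ultimately have "((6+4*t)^2 / (1+t)) / (6+4*t)^2 \<le> (36 + 12*t + 4*t^2) / (6+4*t)^2"
      by (intro divide_right_mono) auto
    moreover have "((6+4*t)^2 / (1+t)) / (6+4*t)^2 = 1/(1+t)"
    proof -
      have "(6+4*t)^2 \<noteq> 0" "1 + t \<noteq> 0" using t0 by auto
      thus ?thesis by (simp add: divide_divide_eq_left)
    qed
    ultimately have "(36 + 12*t + 4*t^2) / (6+4*t)^2 \<ge> 1/(1+t)" by simp
    moreover have "(6 + 2*t) * (6 + 4*t) - t*(6+t)*4 = 36 + 12*t + 4*t^2"
      by (simp add: algebra_simps power2_eq_square)
    ultimately have "((6 + 2*t) * (6 + 4*t) - t*(6+t)*4) / (6+4*t)^2 - 1/(1+t) \<ge> 0" by simp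
    with d show "\<exists>y. DERIV f t :> y \<and> 0 \<le> y" by blast
  qed
  thus ?thesis by (simp add: f_def)
qed

lemma ln_lower_pade:
  fixes x :: real assumes x: "0 \<le> x"
  shows "3 * x * (2 + x) / (6 + 6 * x + x^2) \<le> ln (1 + x)"
proof -
  define f where "f t = ln (1 + t) - 3 * t * (2 + t) / (6 + 6 * t + t^2)" for t :: real
  have "f 0 \<le> f x"
  proof (rule DERIV_nonneg_imp_nondecreasing[OF x])
    fix t :: real assume t0: "0 \<le> t" and "t \<le> x"
    have pos: "6 + 6 * t + t^2 > 0" using t0 by (simp add: add_pos_nonneg)
    have d: "DERIV f t :> 1/(1+t) - ((6 + 6*t) * (6 + 6 * t + t^2) - 3 * t * (2 + t) * (6 + 2*t)) / (6 + 6 * t + t^2)^2"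
      unfolding f_def using t0 pos
      apply (auto intro!: derivative_eq_intros)
      apply (simp add: field_simps power2_eq_square)
      done
    have e: "(6 + 6*t) * (6 + 6 * t + t^2) - 3 * t * (2 + t) * (6 + 2*t) = 36 + 36*t + 12*t^2"
      by (simp add: algebra_simps power2_eq_square)
    have "(6 + 6 * t + t^2)^2 - (36 + 36*t + 12*t^2) * (1+t) = t^4"
      by (simp add: algebra_simps power2_eq_square power4_eq_xxxx)
    hence "(6 + 6 * t + t^2)^2 \<ge> (36 + 36*t + 12*t^2) * (1+t)" by (simp add: algebra_simps)
    hence "(36 + 36*t + 12*t^2) \<le> (6 + 6 * t + t^2)^2 / (1+t)" using t0
      by (simp add: pos_le_divide_eq)
    moreover have "(0::real) < (6 + 6 * t + t^2)^2" using pos by simp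
    ultimately have "(36 + 36*t + 12*t^2) / (6 + 6 * t + t^2)^2 \<le> ((6 + 6 * t + t^2)^2 / (1+t)) / (6 + 6 * t + t^2)^2"
      by (intro divide_right_mono) auto
    moreover have "((6 + 6 * t + t^2)^2 / (1+t)) / (6 + 6 * t + t^2)^2 = 1/(1+t)"
    proof -
      have "(6 + 6 * t + t^2)^2 \<noteq> 0" "1 + t \<noteq> 0" using t0 pos by auto
      thus ?thesis by (simp add: divide_divide_eq_left)
    qed
    ultimately have "(36 + 36*t + 12*t^2) / (6 + 6 * t + t^2)^2 \<le> 1/(1+t)" by simp
    hence "1/(1+t) - ((6 + 6*t) * (6 + 6 * t + t^2) - 3 * t * (2 + t) * (6 + 2*t)) / (6 + 6 * t + t^2)^2 \<ge> 0"
      by (simp add: e)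
    with d show "\<exists>y. DERIV f t :> y \<and> 0 \<le> y" by blast
  qed
  thus ?thesis by (simp add: f_def)
qed


definition T :: "nat \<Rightarrow> real" where "T N = (\<Sum>n\<in>{1..N}. 1/(real n)^2)"

lemma sum_1N_shift: "(\<Sum>n\<in>{1..N}. g n) = (\<Sum>i<N. g (Suc i))"
  by (induction N) (auto simp: atLeastAtMostSuc_conv add.commute)

lemma zeta2_sums: "(\<lambda>n. 1 / (real (Suc n))^2) sums zeta2"
proof -
  have "summable (\<lambda>n. 1 / (real (Suc n))^2)"
    using inverse_squares_sums by (simp add: sums_iff add.commute)
  thus ?thesis unfolding zeta2_def by (simp add: summable_sums)
qed

lemma zeta2_eq: "zeta2 = pi^2/6"
  using inverse_squares_sums unfolding zeta2_def
  by (simp add: sums_iff add.commute)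

lemma zeta2_bounds: "1.6449 \<le> zeta2" "zeta2 \<le> 1.645"
proof -
  have p: "3.141592653588 \<le> pi" "pi \<le> 3.1415926535899" by (rule pi_approx)+
  have "(3.141592653588::real)^2 \<le> pi^2" using p(1) by (intro power_mono) auto
  moreover have "(9.8696::real) \<le> 3.141592653588^2" by (simp add: power2_eq_square)
  ultimately have "9.8696 \<le> pi^2" by linarith
  thus "1.6449 \<le> zeta2" unfolding zeta2_eq by simp
  have "pi^2 \<le> (3.1415926535899::real)^2" using p(2) by (intro power_mono) auto
  moreover have "(3.1415926535899::real)^2 \<le> 9.87" by (simp add: power2_eq_square)
  ultimately have "pi^2 \<le> 9.87" by linarith
  thus "zeta2 \<le> 1.645" unfolding zeta2_eq by simp
qed

lemma tail_sums: "(\<lambda>i. 1 / (real (i + N + 1))^2) sums (zeta2 - T N)"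
proof -
  have "(\<lambda>i. 1 / (real (Suc (i + N)))^2) sums (zeta2 - (\<Sum>i<N. 1 / (real (Suc i))^2))"
    using sums_split_initial_segment[OF zeta2_sums, of N] by simp
  moreover have "T N = (\<Sum>i<N. 1 / (real (Suc i))^2)" unfolding T_def by (rule sum_1N_shift)
  ultimately show ?thesis by simp
qed

lemma tail_upper: assumes "N \<ge> 1" shows "zeta2 - T N \<le> 1 / real N"
proof -
  have lim: "(\<lambda>i. 1 / real (i + N)) \<longlonglongrightarrow> 0"
    using LIMSEQ_ignore_initial_segment[OF lim_inverse_n', of N] by simp
  have ts: "(\<lambda>i. 1 / real (i + N) - 1 / real (Suc i + N)) sums (1 / real (0 + N) - 0)"
    using telescope_sums'[OF lim] by simp
  show ?thesis
  proof (rule sums_le[OF _ tail_sums])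
    show "(\<lambda>i. 1 / real (i + N) - 1 / real (Suc i + N)) sums (1 / real N)" using ts by simp
    fix i
    have p: "real (i + N) > 0" using assms by simp
    have "1 / real (i + N) - 1 / real (Suc i + N) = 1 / (real (i+N) * real (i + N + 1))"
      using p by (simp add: field_simps)
    also have "\<dots> \<ge> 1 / (real (i + N + 1))^2"
      using p by (intro divide_left_mono) (auto simp: power2_eq_square intro!: mult_right_mono)
    finally show "1 / (real (i + N + 1))^2 \<le> 1 / real (i + N) - 1 / real (Suc i + N)" .
  qed
qed

lemma tail_lower: "1 / real (N + 1) \<le> zeta2 - T N"
proof -
  have lim: "(\<lambda>i. 1 / real (i + N + 1)) \<longlonglongrightarrow> 0"
    using LIMSEQ_ignore_initial_segment[OF lim_inverse_n', of "N+1"] by (simp add: add.assoc)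
  have ts: "(\<lambda>i. 1 / real (i + N + 1) - 1 / real (Suc i + N + 1)) sums (1 / real (0 + N + 1) - 0)"
    using telescope_sums'[OF lim] by simp
  show ?thesis
  proof (rule sums_le[OF _ _ tail_sums])
    show "(\<lambda>i. 1 / real (i + N + 1) - 1 / real (Suc i + N + 1)) sums (1 / real (N+1))" using ts by simp
    fix i
    have p: "real (i + N + 1) > 0" by simp
    have "1 / real (i + N + 1) - 1 / real (Suc i + N + 1) = 1 / (real (i+N+1) * real (i + N + 2))"
      using p by (simp add: field_simps)
    also have "\<dots> \<le> 1 / (real (i + N + 1))^2"
      using p by (intro divide_left_mono) (auto simp: power2_eq_square intro!: mult_left_mono)
    finally show "1 / real (i + N + 1) - 1 / real (Suc i + N + 1) \<le> 1 / (real (i + N + 1))^2" .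
  qed
qed



definition S :: "nat \<Rightarrow> real" where "S N = (\<Sum>n\<in>{1..N}. real (totient n) / (real n)^2)"
definition H :: "nat \<Rightarrow> real" where "H N = (\<Sum>n\<in>{1..N}. 1 / real n)"

lemma recursion: "H N = (\<Sum>m\<in>{1..N}. S (N div m) / (real m)^2)"
proof -
  have A: "1 / real n = (\<Sum>d\<in>{d. d dvd n}. real (totient d) / (real n)^2)" if "n \<ge> 1" for n
  proof -
    have "real n = (\<Sum>d | d dvd n. real (totient d))"
      using totient_divisor_sum[of n] by (metis of_nat_sum)
    hence "(\<Sum>d\<in>{d. d dvd n}. real (totient d) / (real n)^2) = real n / (real n)^2"
      by (simp add: sum_divide_distrib)
    thus ?thesis using that by (simp add: power2_eq_square)
  qed
  have "H N = (\<Sum>n\<in>{1..N}. \<Sum>d\<in>{d. d dvd n}. real (totient d) / (real n)^2)"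
    unfolding H_def by (intro sum.cong refl) (use A in auto)
  also have "\<dots> = (\<Sum>(n,d)\<in>Sigma {1..N} (\<lambda>n. {d. d dvd n}). real (totient d) / (real n)^2)"
    by (intro sum.Sigma) auto
  also have "\<dots> = (\<Sum>(m,d)\<in>Sigma {1..N} (\<lambda>m. {1..N div m}). real (totient d) / (real d)^2 / (real m)^2)"
  proof (rule sum.reindex_bij_witness[where i = "\<lambda>(m,d). (d*m, d)" and j = "\<lambda>(n,d). (n div d, d)"])
    fix a assume a: "a \<in> Sigma {1..N} (\<lambda>n. {d. d dvd n})"
    then obtain n d where nd: "a = (n,d)" "1 \<le> n" "n \<le> N" "d dvd n" by auto
    have d0: "d > 0" using nd by (auto intro: dvd_pos_nat)
    show "(\<lambda>(m,d). (d*m, d)) ((\<lambda>(n,d). (n div d, d)) a) = a" using nd by auto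
    have "0 < n div d" using nd d0 dvd_imp_le[of d n] by (simp add: div_greater_zero_iff)
    hence "n div d \<ge> 1" by simp
    moreover have "d \<le> N div (n div d)"
    proof -
      have "d * (n div d) \<le> N" using nd by simp
      thus ?thesis using \<open>n div d \<ge> 1\<close> by (simp add: less_eq_div_iff_mult_less_eq)
    qed
    moreover have "n div d \<le> N" using nd by (meson div_le_dividend le_trans)
    ultimately show "(\<lambda>(n,d). (n div d, d)) a \<in> Sigma {1..N} (\<lambda>m. {1..N div m})"
      using nd d0 by auto
    show "(\<lambda>(m,d). real (totient d) / (real d)^2 / (real m)^2) ((\<lambda>(n,d). (n div d, d)) a) =
          (\<lambda>(n,d). real (totient d) / (real n)^2) a"
      using nd d0 by (auto simp: power2_eq_square of_nat_div field_simps elim!: dvdE)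
  next
    fix b assume b: "b \<in> Sigma {1..N} (\<lambda>m. {1..N div m})"
    then obtain m d where md: "b = (m,d)" "1 \<le> m" "m \<le> N" "1 \<le> d" "d \<le> N div m" by auto
    show "(\<lambda>(n,d). (n div d, d)) ((\<lambda>(m,d). (d*m, d)) b) = b" using md by auto
    have "d * m \<le> N" using md by (simp add: less_eq_div_iff_mult_less_eq)
    moreover have "1 \<le> d * m" using md by simp
    ultimately show "(\<lambda>(m,d). (d*m, d)) b \<in> Sigma {1..N} (\<lambda>n. {d. d dvd n})" using md by auto
  qed
  also have "\<dots> = (\<Sum>m\<in>{1..N}. \<Sum>d\<in>{1..N div m}. real (totient d) / (real d)^2 / (real m)^2)"
    by (rule sum.Sigma[symmetric]) auto
  also have "\<dots> = (\<Sum>m\<in>{1..N}. S (N div m) / (real m)^2)"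
    unfolding S_def by (simp add: sum_divide_distrib)
  finally show ?thesis .
qed




definition ia :: real where "ia = 1 / zeta2"
definition Lam :: "nat \<Rightarrow> real" where "Lam N = (\<Sum>m\<in>{1..N}. ln (real m) / (real m)^2)"
definition K :: "nat \<Rightarrow> real" where "K N = H N - ia * ln (real N) * T N + ia * Lam N"
definition bb :: real where "bb = 1 - ia * ln 2"

lemma zeta2_pos: "zeta2 > 0" using zeta2_bounds by simp
lemma ia_bounds: "0.6079027 \<le> ia" "ia \<le> 0.60794" "ia > 0"
proof -
  show "0.6079027 \<le> ia" unfolding ia_def using zeta2_bounds zeta2_pos
    by (simp add: le_divide_eq)
  show "ia \<le> 0.60794" unfolding ia_def using zeta2_bounds zeta2_pos
    by (simp add: divide_le_eq)
  show "ia > 0" unfolding ia_def using zeta2_pos by simp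
qed

lemma T_le_zeta2: "T N \<le> zeta2" using tail_lower[of N]
  by (smt (verit) of_nat_less_0_iff divide_nonneg_nonneg of_nat_0_le_iff)

lemma T_ge: "N \<ge> 1 \<Longrightarrow> T N \<ge> zeta2 - 1 / real N" using tail_upper[of N] by simp

lemma T_split: "N \<ge> 1 \<Longrightarrow> T N = 1 + (\<Sum>m\<in>{2..N}. 1 / (real m)^2)"
  unfolding T_def by (simp add: sum.atLeast_Suc_atMost numeral_2_eq_2)

lemma Lam_split: "N \<ge> 1 \<Longrightarrow> Lam N = (\<Sum>m\<in>{2..N}. ln (real m) / (real m)^2)"
  unfolding Lam_def by (simp add: sum.atLeast_Suc_atMost numeral_2_eq_2)

lemma rec2: "N \<ge> 1 \<Longrightarrow> H N = S N + (\<Sum>m\<in>{2..N}. S (N div m) / (real m)^2)"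
  using recursion[of N] by (simp add: sum.atLeast_Suc_atMost numeral_2_eq_2)

lemma T_diff: "k \<le> N \<Longrightarrow> T N - T k = (\<Sum>m\<in>{Suc k..N}. 1 / (real m)^2)"
proof (induction N rule: dec_induct)
  case base then show ?case by simp
next
  case (step n) then show ?case unfolding T_def by (simp add: atLeastAtMostSuc_conv)
qed

lemma tail_count:
  assumes N: "N \<ge> 4"
  shows "(\<Sum>m\<in>{m\<in>{2..N}. \<not> 4 * m \<le> N}. 1 / (real m)^2) \<le> 4 / (real N - 3)"
proof -
  define k where "k = N div 4"
  have k1: "k \<ge> 1" using N by (simp add: k_def)
  have sub: "{m\<in>{2..N}. \<not> 4 * m \<le> N} \<subseteq> {Suc k..N}" unfolding k_def by auto
  have "(\<Sum>m\<in>{m\<in>{2..N}. \<not> 4 * m \<le> N}. 1 / (real m)^2) \<le> (\<Sum>m\<in>{Suc k..N}. 1 / (real m)^2)"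
    by (rule sum_mono2[OF _ sub]) auto
  also have "\<dots> = T N - T k" using T_diff[of k N] k_def by simp
  also have "\<dots> \<le> zeta2 - T k" using T_le_zeta2[of N] by simp
  also have "\<dots> \<le> 1 / real k" using tail_upper[OF k1] .
  also have "\<dots> \<le> 4 / (real N - 3)"
  proof -
    have "4 * k + 3 \<ge> N" unfolding k_def by linarith
    hence "4 * real k \<ge> real N - 3" by linarith
    moreover have "real N - 3 > 0" using N by simp
    ultimately show ?thesis using k1 by (simp add: field_simps)
  qed
  finally show ?thesis .
qed

definition PL :: "nat \<Rightarrow> bool" where "PL M \<longleftrightarrow> S M \<ge> 1 + ia * (ln (real M + 1) - ln 2)"
definition PU :: "nat \<Rightarrow> bool" where "PU M \<longleftrightarrow> S M \<le> 1 + ia * ln (real M)"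
definition PU' :: "nat \<Rightarrow> bool" where "PU' M \<longleftrightarrow> S M \<le> 4/5 + ia * ln (real M)"

lemma upper_sum:
  assumes N: "N \<ge> 2"
  and IH: "\<And>M. 1 \<le> M \<Longrightarrow> M < N \<Longrightarrow> PL M"
  shows "S N \<le> ia * ln (real N) + K N - bb * (T N - 1)"
proof -
  have trm: "S (N div m) / (real m)^2 \<ge> (bb + ia * (ln (real N) - ln (real m))) / (real m)^2"
    if m: "m \<in> {2..N}" for m
  proof -
    define M where "M = N div m"
    have m2: "m \<ge> 2" "m \<le> N" using m by auto
    have "0 < M" using m2 unfolding M_def by (subst div_greater_zero_iff) simp
    hence M1: "M \<ge> 1" by simp
    have MN: "M < N" using m2 unfolding M_def by (simp add: div_less_dividend)
    have e: "M * m + N mod m = N" unfolding M_def by (rule div_mult_mod_eq)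
    have "N mod m < m" using m2 by simp
    hence "N \<le> (M + 1) * m" using e by (simp add: algebra_simps)
    hence "real N \<le> real ((M + 1) * m)" by (simp only: of_nat_le_iff)
    hence "real N \<le> (real M + 1) * real m" by (simp add: algebra_simps)
    hence "ln (real N) \<le> ln ((real M + 1) * real m)" using m2 by (intro ln_mono) auto
    also have "\<dots> = ln (real M + 1) + ln (real m)" using m2 by (simp add: ln_mult)
    finally have lnb: "ln (real N) - ln (real m) \<le> ln (real M + 1)" by simp
    have "PL M" using IH M1 MN by auto
    hence "S M \<ge> bb + ia * ln (real M + 1)" unfolding PL_def bb_def by (simp add: algebra_simps)
    moreover have "ia * (ln (real N) - ln (real m)) \<le> ia * ln (real M + 1)"
      using lnb ia_bounds by (intro mult_left_mono) auto
    ultimately have "bb + ia * (ln (real N) - ln (real m)) \<le> S M" by linarith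
    thus ?thesis unfolding M_def by (intro divide_right_mono) auto
  qed
  have "H N = S N + (\<Sum>m\<in>{2..N}. S (N div m) / (real m)^2)" using rec2 N by simp
  moreover have "(\<Sum>m\<in>{2..N}. S (N div m) / (real m)^2) \<ge>
      (\<Sum>m\<in>{2..N}. (bb + ia * (ln (real N) - ln (real m))) / (real m)^2)"
    by (rule sum_mono) (rule trm)
  moreover have "(\<Sum>m\<in>{2..N}. (bb + ia * (ln (real N) - ln (real m))) / (real m)^2)
      = (bb + ia * ln (real N)) * (\<Sum>m\<in>{2..N}. 1 / (real m)^2) - ia * (\<Sum>m\<in>{2..N}. ln (real m) / (real m)^2)"
    by (simp add: sum_distrib_left sum_subtractf[symmetric] algebra_simps diff_divide_distrib add_divide_distrib)
  ultimately have "S N \<le> H N - ((bb + ia * ln (real N)) * (T N - 1) - ia * Lam N)"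
    using T_split[of N] Lam_split[of N] N by simp
  thus ?thesis unfolding K_def by (simp add: algebra_simps)
qed

lemma lower_sum:
  assumes N: "N \<ge> 4"
  and IH: "\<And>M. 1 \<le> M \<Longrightarrow> M < N \<Longrightarrow> PU M \<and> (4 \<le> M \<longrightarrow> PU' M)"
  shows "S N \<ge> ia * ln (real N) + K N - 4/5 * (T N - 1) - 1/5 * (4 / (real N - 3))"
proof -
  define u where "u m = 4/5 + (if 4 * m \<le> N then 0 else (1/5::real))" for m :: nat
  have trm: "S (N div m) / (real m)^2 \<le> (ia * (ln (real N) - ln (real m)) + u m) / (real m)^2"
    if m: "m \<in> {2..N}" for m
  proof -
    define M where "M = N div m"
    have m2: "m \<ge> 2" "m \<le> N" using m by auto
    have "0 < M" using m2 unfolding M_def by (subst div_greater_zero_iff) simp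
    hence M1: "M \<ge> 1" by simp
    have MN: "M < N" using m2 unfolding M_def by (simp add: div_less_dividend)
    have "M * m \<le> N" unfolding M_def by simp
    hence "real M * real m \<le> real N" by (metis of_nat_le_iff of_nat_mult)
    hence "ln (real M * real m) \<le> ln (real N)" using M1 m2 by (intro ln_mono) auto
    moreover have "ln (real M * real m) = ln (real M) + ln (real m)" using M1 m2 by (simp add: ln_mult)
    ultimately have lnb: "ln (real M) \<le> ln (real N) - ln (real m)" by simp
    have ilnb: "ia * ln (real M) \<le> ia * (ln (real N) - ln (real m))"
      using lnb ia_bounds by (intro mult_left_mono) auto
    have "S M \<le> ia * (ln (real N) - ln (real m)) + u m"
    proof (cases "4 * m \<le> N")
      case True
      hence "4 \<le> M" unfolding M_def using m2 by (simp add: less_eq_div_iff_mult_less_eq)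
      hence "PU' M" using IH M1 MN by auto
      thus ?thesis using ilnb True unfolding PU'_def u_def by simp
    next
      case False
      have "PU M" using IH M1 MN by auto
      thus ?thesis using ilnb False unfolding PU_def u_def by simp
    qed
    thus ?thesis unfolding M_def by (intro divide_right_mono) auto
  qed
  have hr: "H N = S N + (\<Sum>m\<in>{2..N}. S (N div m) / (real m)^2)" using rec2 N by simp
  have le1: "(\<Sum>m\<in>{2..N}. S (N div m) / (real m)^2) \<le>
      (\<Sum>m\<in>{2..N}. (ia * (ln (real N) - ln (real m)) + u m) / (real m)^2)"
    by (rule sum_mono) (rule trm)
  have eq1: "(\<Sum>m\<in>{2..N}. (ia * (ln (real N) - ln (real m)) + u m) / (real m)^2)
      = ia * ln (real N) * (\<Sum>m\<in>{2..N}. 1 / (real m)^2) - ia * (\<Sum>m\<in>{2..N}. ln (real m) / (real m)^2)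
        + 4/5 * (\<Sum>m\<in>{2..N}. 1 / (real m)^2) + 1/5 * (\<Sum>m\<in>{2..N}. (if 4 * m \<le> N then 0 else 1 / (real m)^2))"
  proof -
    have pw: "(ia * (ln (real N) - ln (real m)) + u m) / (real m)^2 =
       ia * ln (real N) * (1 / (real m)^2) - ia * (ln (real m) / (real m)^2) + 4/5 * (1 / (real m)^2)
       + 1/5 * (if 4 * m \<le> N then 0 else 1 / (real m)^2)" for m
      unfolding u_def by (cases "m = 0"; cases "4 * m \<le> N") (simp_all add: field_simps)
    show ?thesis
      by (simp only: pw sum.distrib sum_subtractf sum_distrib_left[symmetric])
  qed
  have eq2: "(\<Sum>m\<in>{2..N}. (if 4 * m \<le> N then 0 else 1 / (real m)^2))
      = (\<Sum>m\<in>{m\<in>{2..N}. \<not> 4 * m \<le> N}. 1 / (real m)^2)"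
    by (subst sum.inter_filter) (auto intro!: sum.cong)
  have eqA: "(\<Sum>m\<in>{2..N}. 1 / (real m)^2) = T N - 1" using T_split[of N] N by simp
  have eqB: "(\<Sum>m\<in>{2..N}. ln (real m) / (real m)^2) = Lam N" using Lam_split[of N] N by simp
  have s2: "1/5 * (\<Sum>m\<in>{m\<in>{2..N}. \<not> 4 * m \<le> N}. 1 / (real m)^2) \<le> 1/5 * (4 / (real N - 3))"
    using tail_count[OF N] by (intro mult_left_mono) auto
  from le1 eq1 eq2 s2 have "(\<Sum>m\<in>{2..N}. S (N div m) / (real m)^2) \<le>
     ia * ln (real N) * (T N - 1) - ia * Lam N + 4/5 * (T N - 1) + 1/5 * (4 / (real N - 3))"
    unfolding eqA eqB by linarith
  with hr have "S N \<ge> H N - (ia * ln (real N) * (T N - 1) - ia * Lam N + 4/5 * (T N - 1) + 1/5 * (4 / (real N - 3)))"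
    by linarith
  thus ?thesis unfolding K_def by (simp add: algebra_simps)
qed

lemma frac_cross:
  fixes a b c d :: real
  assumes "0 < b" "0 < d" "a * d \<le> c * b" shows "a / b \<le> c / d"
  using assms by (simp add: field_simps)

lemma ln_step_bounds:
  assumes k: "k \<ge> (1::nat)"
  shows "ln (real k + 1) - ln (real k) \<le> (6 * real k + 1) / (real k * (6 * real k + 4))"
    and "3 * (2 * real k + 1) / (6 * (real k)^2 + 6 * real k + 1) \<le> ln (real k + 1) - ln (real k)"
proof -
  have kp: "real k > 0" using k by simp
  have "1 + 1 / real k = (real k + 1) / real k" using kp by (simp add: field_simps)
  hence e: "ln (real k + 1) - ln (real k) = ln (1 + 1 / real k)"
    using kp by (simp add: ln_div)
  have "ln (1 + 1 / real k) \<le> (1 / real k) * (6 + 1 / real k) / (6 + 4 * (1 / real k))"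
    using kp by (intro ln_upper_pade) simp
  also have "\<dots> = (6 * real k + 1) / (real k * (6 * real k + 4))"
  proof -
    have a1: "6 + 1 / real k = (6 * real k + 1) / real k" using kp by (simp add: field_simps)
    have a2: "6 + 4 * (1 / real k) = (6 * real k + 4) / real k" using kp by (simp add: field_simps)
    have a3: "6 * real k + 4 > 0" using kp by simp
    show ?thesis unfolding a1 a2 using kp a3 by (simp add: divide_simps)
  qed
  finally show "ln (real k + 1) - ln (real k) \<le> (6 * real k + 1) / (real k * (6 * real k + 4))" using e by simp
  have "3 * (1 / real k) * (2 + 1 / real k) / (6 + 6 * (1 / real k) + (1 / real k)^2) \<le> ln (1 + 1 / real k)"
    using kp by (intro ln_lower_pade) simp
  moreover have "3 * (1 / real k) * (2 + 1 / real k) / (6 + 6 * (1 / real k) + (1 / real k)^2)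
      = 3 * (2 * real k + 1) / (6 * (real k)^2 + 6 * real k + 1)"
  proof -
    have a1: "3 * (1 / real k) * (2 + 1 / real k) = (3 * (2 * real k + 1)) / (real k)^2"
      using kp by (simp add: field_simps power2_eq_square)
    have a2: "6 + 6 * (1 / real k) + (1 / real k)^2 = (6 * (real k)^2 + 6 * real k + 1) / (real k)^2"
      using kp by (simp add: field_simps power2_eq_square)
    have a3: "(real k)^2 > 0" using kp by simp
    show ?thesis unfolding a1 a2 using a3 by (simp add: divide_simps)
  qed
  ultimately show "3 * (2 * real k + 1) / (6 * (real k)^2 + 6 * real k + 1) \<le> ln (real k + 1) - ln (real k)"
    using e by simp
qed

lemma K_step: "K (Suc n) = K n + 1 / (real n + 1) - ia * T n * (ln (real n + 1) - ln (real n))"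
proof -
  have "H (Suc n) = H n + 1 / (real n + 1)" unfolding H_def by (simp add: add.commute)
  moreover have "T (Suc n) = T n + 1 / (real n + 1)^2" unfolding T_def by (simp add: add.commute)
  moreover have "Lam (Suc n) = Lam n + ln (real n + 1) / (real n + 1)^2" unfolding Lam_def by (simp add: add.commute)
  ultimately show ?thesis unfolding K_def by (simp add: algebra_simps)
qed

lemma iaT_upper: "ia * T n \<le> 1 - ia / (real n + 1)"
proof -
  have "1 / (real n + 1) \<le> zeta2 - T n" using tail_lower[of n] by (simp add: add.commute)
  hence "ia * (1 / (real n + 1)) \<le> ia * (zeta2 - T n)" using ia_bounds by (intro mult_left_mono) auto
  moreover have "ia * zeta2 = 1" unfolding ia_def using zeta2_pos by simp
  ultimately show ?thesis by (simp add: algebra_simps)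
qed

lemma iaT_lower: "n \<ge> 1 \<Longrightarrow> ia * T n \<ge> 1 - ia / real n"
proof -
  assume n: "n \<ge> 1"
  have "zeta2 - T n \<le> 1 / real n" by (rule tail_upper[OF n])
  hence "ia * (zeta2 - T n) \<le> ia * (1 / real n)" using ia_bounds by (intro mult_left_mono) auto
  moreover have "ia * zeta2 = 1" unfolding ia_def using zeta2_pos by simp
  ultimately show ?thesis by (simp add: algebra_simps)
qed

lemma T_nonneg: "T n \<ge> 0" unfolding T_def by (intro sum_nonneg) auto

lemma K_mono_step:
  assumes n: "n \<ge> 2"
  shows "K n \<le> K (Suc n)"
proof -
  define x where "x = real n"
  have x2: "x \<ge> 2" using n by (simp add: x_def)
  define L where "L = ln (x + 1) - ln x"
  have Lu: "L \<le> (6 * x + 1) / (x * (6 * x + 4))" unfolding L_def x_def using ln_step_bounds(1)[of n] n by simp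
  have L0: "L \<ge> 0" unfolding L_def using x2 by simp
  have tr: "(6 * x + 1) / (x * (6 * x + 4)) \<le> (2 * x + 1) / (2 * x * (x + 1))"
  proof (rule frac_cross)
    show "0 < x * (6 * x + 4)" "0 < 2 * x * (x + 1)" using x2 by auto
    have "(2 * x + 1) * (x * (6 * x + 4)) - (6 * x + 1) * (2 * x * (x + 1)) = 2 * x"
      by (simp add: algebra_simps)
    thus "(6 * x + 1) * (2 * x * (x + 1)) \<le> (2 * x + 1) * (x * (6 * x + 4))" using x2 by linarith
  qed
  have A: "0 \<le> ia * T n" using ia_bounds T_nonneg[of n] by simp
  have B: "ia * T n \<le> 1 - ia / (x + 1)" using iaT_upper[of n] by (simp add: x_def)
  have "ia * T n * L \<le> (1 - ia / (x + 1)) * ((2 * x + 1) / (2 * x * (x + 1)))"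
    using A B L0 Lu tr by (intro mult_mono) auto
  also have "\<dots> \<le> 1 / (x + 1)"
  proof -
    have ia: "0.6079027 \<le> ia" using ia_bounds by simp
    have "x * (2 * ia - 1) \<ge> 2 * (2 * ia - 1)" using x2 ia by (intro mult_right_mono) auto
    hence key: "(x + 1 - ia) * (2 * x + 1) \<le> 2 * x * (x + 1)" using ia by (simp add: algebra_simps)
    have "(1 - ia / (x + 1)) * ((2 * x + 1) / (2 * x * (x + 1))) = (x + 1 - ia) * (2 * x + 1) / (2 * x * (x + 1) * (x + 1))"
      using x2 by (simp add: field_simps)
    also have "\<dots> \<le> 2 * x * (x + 1) / (2 * x * (x + 1) * (x + 1))"
      using key x2 by (intro divide_right_mono) auto
    also have "\<dots> = 1 / (x + 1)" using x2 by simp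
    finally show ?thesis .
  qed
  finally have "ia * T n * L \<le> 1 / (x + 1)" .
  thus ?thesis using K_step[of n] unfolding L_def x_def by simp
qed

lemma K_upper_step:
  assumes n: "n \<ge> 40"
  shows "K (Suc n) \<le> K n + 0.122 * (1 / real n - 1 / real (Suc n))"
proof -
  define x where "x = real n"
  have x2: "x \<ge> 40" using n by (simp add: x_def)
  define L where "L = ln (x + 1) - ln x"
  have Ll: "3 * (2 * x + 1) / (6 * x^2 + 6 * x + 1) \<le> L" unfolding L_def x_def using ln_step_bounds(2)[of n] n by simp
  have tr: "2 / (2 * x + 1) \<le> 3 * (2 * x + 1) / (6 * x^2 + 6 * x + 1)"
  proof (rule frac_cross)
    have "x^2 \<ge> 0" by simp
    thus "0 < 2 * x + 1" "0 < 6 * x^2 + 6 * x + 1" using x2 by linarith+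
    have "3 * (2 * x + 1) * (2 * x + 1) - 2 * (6 * x^2 + 6 * x + 1) = 1"
      by (simp add: algebra_simps power2_eq_square)
    thus "2 * (6 * x^2 + 6 * x + 1) \<le> 3 * (2 * x + 1) * (2 * x + 1)" by linarith
  qed
  have ia: "0.6079027 \<le> ia" "ia \<le> 0.60794" using ia_bounds by simp_all
  have B: "1 - ia / x \<le> ia * T n" using iaT_lower[of n] n by (simp add: x_def)
  have B0: "0 \<le> 1 - ia / x" using x2 ia by (simp add: field_simps)
  have "(1 - ia / x) * (2 / (2 * x + 1)) \<le> ia * T n * L"
    using B B0 Ll tr x2 T_nonneg[of n] ia_bounds by (intro mult_mono) auto
  moreover have "1 / (x + 1) - (1 - ia / x) * (2 / (2 * x + 1)) \<le> 0.122 * (1 / x - 1 / (x + 1))"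
  proof -
    have "x * (2 * ia - 1.244) \<le> 40 * (2 * ia - 1.244)" using x2 ia by (intro mult_right_mono_neg) auto
    hence key: "x * (2 * x + 1) - 2 * (x - ia) * (x + 1) \<le> 0.122 * (2 * x + 1)" using ia
      by (simp add: algebra_simps)
    have nz: "x > 0" "x + 1 > 0" "2 * x + 1 > 0" using x2 by auto
    have "1 / (x + 1) - (1 - ia / x) * (2 / (2 * x + 1)) = (x * (2 * x + 1) - 2 * (x - ia) * (x + 1)) / (x * (x + 1) * (2 * x + 1))"
      using nz by (simp add: divide_simps)
    also have "\<dots> \<le> 0.122 * (2 * x + 1) / (x * (x + 1) * (2 * x + 1))"
      using key x2 by (intro divide_right_mono) auto
    also have "\<dots> = 0.122 * (1 / x - 1 / (x + 1))" using nz by (simp add: divide_simps)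
    finally show ?thesis .
  qed
  ultimately have "K (Suc n) \<le> K n + 0.122 * (1 / x - 1 / (x + 1))" using K_step[of n] unfolding L_def x_def by linarith
  thus ?thesis by (simp add: x_def add.commute)
qed

lemma K_bounds_large:
  assumes N: "N \<ge> 40"
  shows "K 40 \<le> K N" "K N \<le> K 40 + 0.122 * (1/40 - 1 / real N)"
proof -
  show "K 40 \<le> K N" using N
  proof (induction N rule: dec_induct)
    case (step n) thus ?case using K_mono_step[of n] by simp
  qed simp
  show "K N \<le> K 40 + 0.122 * (1/40 - 1 / real N)" using N
  proof (induction N rule: dec_induct)
    case (step n)
    have e0: "c * (p - q) = c * (p - r) + c * (r - q)" for c p q r :: real by (simp add: algebra_simps)
    have e: "0.122 * (1/40 - 1 / real (Suc n)) = 0.122 * (1/40 - 1 / real n) + 0.122 * (1 / real n - 1 / real (Suc n))"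
      by (rule e0)
    show ?case using step K_upper_step[of n] unfolding e by linarith
  qed simp
qed



lemma S_num: "n \<ge> 1 \<Longrightarrow> S n = S (n - 1) + real (totient n) / (real n)^2"
  unfolding S_def by (cases n) (auto simp: add.commute)
lemma T_num: "n \<ge> 1 \<Longrightarrow> T n = T (n - 1) + 1 / (real n)^2"
  unfolding T_def by (cases n) (auto simp: add.commute)
lemma K_num: "K (Suc n) = K n + 1 / real (Suc n) - ia * T n * (ln (real (Suc n)) - ln (real n))"
  using K_step[of n] by (simp add: add.commute)
lemma S1: "S 1 = 1" unfolding S_def by simp
lemma T1: "T 1 = 1" unfolding T_def by simp
lemma K1: "K 1 = 1" unfolding K_def H_def T_def Lam_def by simp

lemma ia_fr: "6079027/10000000 \<le> ia" "ia \<le> 60794/100000" "0 \<le> ia"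
  using ia_bounds by simp_all

lemma prod3_lo:
  fixes a t l al tl ll :: real
  shows "0 \<le> al \<Longrightarrow> al \<le> a \<Longrightarrow> 0 \<le> tl \<Longrightarrow> tl \<le> t \<Longrightarrow> 0 \<le> ll \<Longrightarrow> ll \<le> l \<Longrightarrow> al * tl * ll \<le> a * t * l"
  by (intro mult_mono) (auto intro: mult_nonneg_nonneg order_trans)
lemma prod3_hi:
  fixes a t l ah th lh :: real
  shows "0 \<le> a \<Longrightarrow> a \<le> ah \<Longrightarrow> 0 \<le> t \<Longrightarrow> t \<le> th \<Longrightarrow> 0 \<le> l \<Longrightarrow> l \<le> lh \<Longrightarrow> a * t * l \<le> ah * th * lh"
  by (intro mult_mono) (auto intro: mult_nonneg_nonneg order_trans)

lemma chkL:
  assumes "Sl \<le> S N" "1 \<le> Sl" "ln A - ln 2 \<le> X" "X \<le> 1.6449 * (Sl - 1)" "A = real N + 1"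
  shows "PL N"
proof -
  have ia: "ia * 1.6449 \<le> 1" "0 \<le> ia" unfolding ia_def using zeta2_bounds zeta2_pos by (auto simp: field_simps)
  have "ia * (ln A - ln 2) \<le> ia * X" using assms(3) ia by (intro mult_left_mono) auto
  also have "\<dots> \<le> ia * (1.6449 * (Sl - 1))" using assms(4) ia by (intro mult_left_mono) auto
  also have "\<dots> = (ia * 1.6449) * (Sl - 1)" by simp
  also have "\<dots> \<le> 1 * (Sl - 1)" using ia assms(2) by (intro mult_right_mono) auto
  finally show ?thesis unfolding PL_def using assms(1,5) by simp
qed

lemma chkU:
  assumes "S N \<le> Sh" "0 \<le> Y" "Y \<le> ln A" "A = real N" "Sh \<le> c + Y / 1.645"
  shows "S N \<le> c + ia * ln (real N)"
proof -
  have ia: "1 / 1.645 \<le> ia" unfolding ia_def using zeta2_bounds zeta2_pos by (auto simp: field_simps)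
  have "Y / 1.645 = (1/1.645) * Y" by simp
  also have "\<dots> \<le> ia * Y" using ia assms(2) by (intro mult_right_mono) auto
  also have "\<dots> \<le> ia * ln A" using assms(3) ia_bounds by (intro mult_left_mono) auto
  finally show ?thesis using assms(1,4,5) by simp
qed

lemma Lst1: "ln 2 - ln 1 \<le> (7/10::real)" "(9/13::real) \<le> ln 2 - ln 1"
  using ln_step_bounds[of 1] by simp_all
lemma Lst2: "ln 3 - ln 2 \<le> (13/32::real)" "(15/37::real) \<le> ln 3 - ln 2"
  using ln_step_bounds[of 2] by simp_all
lemma Lst3: "ln 4 - ln 3 \<le> (19/66::real)" "(21/73::real) \<le> ln 4 - ln 3"
  using ln_step_bounds[of 3] by simp_all
lemma Lst4: "ln 5 - ln 4 \<le> (25/112::real)" "(27/121::real) \<le> ln 5 - ln 4"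
  using ln_step_bounds[of 4] by simp_all
lemma Lst5: "ln 6 - ln 5 \<le> (31/170::real)" "(33/181::real) \<le> ln 6 - ln 5"
  using ln_step_bounds[of 5] by simp_all
lemma Lst6: "ln 7 - ln 6 \<le> (37/240::real)" "(39/253::real) \<le> ln 7 - ln 6"
  using ln_step_bounds[of 6] by simp_all
lemma Lst7: "ln 8 - ln 7 \<le> (43/322::real)" "(45/337::real) \<le> ln 8 - ln 7"
  using ln_step_bounds[of 7] by simp_all
lemma Lst8: "ln 9 - ln 8 \<le> (49/416::real)" "(51/433::real) \<le> ln 9 - ln 8"
  using ln_step_bounds[of 8] by simp_all
lemma Lst9: "ln 10 - ln 9 \<le> (55/522::real)" "(57/541::real) \<le> ln 10 - ln 9"
  using ln_step_bounds[of 9] by simp_all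
lemma Lst10: "ln 11 - ln 10 \<le> (61/640::real)" "(63/661::real) \<le> ln 11 - ln 10"
  using ln_step_bounds[of 10] by simp_all
lemma Lst11: "ln 12 - ln 11 \<le> (67/770::real)" "(69/793::real) \<le> ln 12 - ln 11"
  using ln_step_bounds[of 11] by simp_all
lemma Lst12: "ln 13 - ln 12 \<le> (73/912::real)" "(75/937::real) \<le> ln 13 - ln 12"
  using ln_step_bounds[of 12] by simp_all
lemma Lst13: "ln 14 - ln 13 \<le> (79/1066::real)" "(81/1093::real) \<le> ln 14 - ln 13"
  using ln_step_bounds[of 13] by simp_all
lemma Lst14: "ln 15 - ln 14 \<le> (85/1232::real)" "(87/1261::real) \<le> ln 15 - ln 14"
  using ln_step_bounds[of 14] by simp_all
lemma Lst15: "ln 16 - ln 15 \<le> (91/1410::real)" "(93/1441::real) \<le> ln 16 - ln 15"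
  using ln_step_bounds[of 15] by simp_all
lemma Lst16: "ln 17 - ln 16 \<le> (97/1600::real)" "(99/1633::real) \<le> ln 17 - ln 16"
  using ln_step_bounds[of 16] by simp_all
lemma Lst17: "ln 18 - ln 17 \<le> (103/1802::real)" "(105/1837::real) \<le> ln 18 - ln 17"
  using ln_step_bounds[of 17] by simp_all
lemma Lst18: "ln 19 - ln 18 \<le> (109/2016::real)" "(111/2053::real) \<le> ln 19 - ln 18"
  using ln_step_bounds[of 18] by simp_all
lemma Lst19: "ln 20 - ln 19 \<le> (115/2242::real)" "(117/2281::real) \<le> ln 20 - ln 19"
  using ln_step_bounds[of 19] by simp_all
lemma Lst20: "ln 21 - ln 20 \<le> (121/2480::real)" "(123/2521::real) \<le> ln 21 - ln 20"
  using ln_step_bounds[of 20] by simp_all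
lemma Lst21: "ln 22 - ln 21 \<le> (127/2730::real)" "(129/2773::real) \<le> ln 22 - ln 21"
  using ln_step_bounds[of 21] by simp_all
lemma Lst22: "ln 23 - ln 22 \<le> (133/2992::real)" "(135/3037::real) \<le> ln 23 - ln 22"
  using ln_step_bounds[of 22] by simp_all
lemma Lst23: "ln 24 - ln 23 \<le> (139/3266::real)" "(141/3313::real) \<le> ln 24 - ln 23"
  using ln_step_bounds[of 23] by simp_all
lemma Lst24: "ln 25 - ln 24 \<le> (145/3552::real)" "(147/3601::real) \<le> ln 25 - ln 24"
  using ln_step_bounds[of 24] by simp_all
lemma Lst25: "ln 26 - ln 25 \<le> (151/3850::real)" "(153/3901::real) \<le> ln 26 - ln 25"
  using ln_step_bounds[of 25] by simp_all
lemma Lst26: "ln 27 - ln 26 \<le> (157/4160::real)" "(159/4213::real) \<le> ln 27 - ln 26"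
  using ln_step_bounds[of 26] by simp_all
lemma Lst27: "ln 28 - ln 27 \<le> (163/4482::real)" "(165/4537::real) \<le> ln 28 - ln 27"
  using ln_step_bounds[of 27] by simp_all
lemma Lst28: "ln 29 - ln 28 \<le> (169/4816::real)" "(171/4873::real) \<le> ln 29 - ln 28"
  using ln_step_bounds[of 28] by simp_all
lemma Lst29: "ln 30 - ln 29 \<le> (175/5162::real)" "(177/5221::real) \<le> ln 30 - ln 29"
  using ln_step_bounds[of 29] by simp_all
lemma Lst30: "ln 31 - ln 30 \<le> (181/5520::real)" "(183/5581::real) \<le> ln 31 - ln 30"
  using ln_step_bounds[of 30] by simp_all
lemma Lst31: "ln 32 - ln 31 \<le> (187/5890::real)" "(189/5953::real) \<le> ln 32 - ln 31"
  using ln_step_bounds[of 31] by simp_all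
lemma Lst32: "ln 33 - ln 32 \<le> (193/6272::real)" "(195/6337::real) \<le> ln 33 - ln 32"
  using ln_step_bounds[of 32] by simp_all
lemma Lst33: "ln 34 - ln 33 \<le> (199/6666::real)" "(201/6733::real) \<le> ln 34 - ln 33"
  using ln_step_bounds[of 33] by simp_all
lemma Lst34: "ln 35 - ln 34 \<le> (205/7072::real)" "(207/7141::real) \<le> ln 35 - ln 34"
  using ln_step_bounds[of 34] by simp_all
lemma Lst35: "ln 36 - ln 35 \<le> (211/7490::real)" "(213/7561::real) \<le> ln 36 - ln 35"
  using ln_step_bounds[of 35] by simp_all
lemma Lst36: "ln 37 - ln 36 \<le> (217/7920::real)" "(219/7993::real) \<le> ln 37 - ln 36"
  using ln_step_bounds[of 36] by simp_all
lemma Lst37: "ln 38 - ln 37 \<le> (223/8362::real)" "(225/8437::real) \<le> ln 38 - ln 37"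
  using ln_step_bounds[of 37] by simp_all
lemma Lst38: "ln 39 - ln 38 \<le> (229/8816::real)" "(231/8893::real) \<le> ln 39 - ln 38"
  using ln_step_bounds[of 38] by simp_all
lemma Lst39: "ln 40 - ln 39 \<le> (235/9282::real)" "(237/9361::real) \<le> ln 40 - ln 39"
  using ln_step_bounds[of 39] by simp_all
lemma Lst40: "ln 41 - ln 40 \<le> (241/9760::real)" "(243/9841::real) \<le> ln 41 - ln 40"
  using ln_step_bounds[of 40] by simp_all
lemma LN2: "(346538319141/500000000000::real) \<le> ln 2" "ln 2 \<le> (694128787879/1000000000000::real)"
proof -
  have "ln (4::real) = 2 * ln 2" using ln_realpow[of 2 2] by simp
  thus "(346538319141/500000000000::real) \<le> ln 2" "ln 2 \<le> (694128787879/1000000000000::real)" using Lst2 Lst3 by linarith+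
qed
lemma LN3: "(1098482043687/1000000000000::real) \<le> ln 3" "ln 3 \<le> (1100378787879/1000000000000::real)" using LN2 Lst2 by linarith+
lemma LN4: "(1386153276563/1000000000000::real) \<le> ln 4" "ln 4 \<le> (694128787879/500000000000::real)" using LN3 Lst3 by linarith+
lemma LN5: "(160929377243/100000000000::real) \<le> ln 5" "ln 5 \<le> (1611471861473/1000000000000::real)" using LN4 Lst4 by linarith+
lemma LN6: "(895807107209/500000000000::real) \<le> ln 6" "ln 6 \<le> (35876496053/20000000000::real)" using LN5 Lst5 by linarith+
lemma LN7: "(972882206023/500000000000::real) \<le> ln 7" "ln 7 \<le> (1947991469317/1000000000000::real)" using LN6 Lst6 by linarith+
lemma LN8: "(519823892329/250000000000::real) \<le> ln 8" "ln 8 \<le> (520382960497/250000000000::real)" using LN7 Lst7 by linarith+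
lemma LN9: "(1098539239623/500000000000::real) \<le> ln 9" "ln 9 \<le> (2199320303527/1000000000000::real)" using LN8 Lst8 by linarith+
lemma LN10: "(575609730717/250000000000::real) \<le> ln 10" "ln 10 \<le> (1152342144101/500000000000::real)" using LN9 Lst9 by linarith+
lemma LN11: "(95909962361/40000000000::real) \<le> ln 11" "ln 11 \<le> (1199998394101/500000000000::real)" using LN10 Lst10 by linarith+
lemma LN12: "(2484760408331/1000000000000::real) \<le> ln 12" "ln 12 \<le> (497401955043/200000000000::real)" using LN11 Lst11 by linarith+
lemma LN13: "(512960619553/200000000000::real) \<le> ln 13" "ln 13 \<le> (513410726973/200000000000::real)" using LN12 Lst12 by linarith+
lemma LN14: "(659727764377/250000000000::real) \<le> ln 14" "ln 14 \<le> (2641162452877/1000000000000::real)" using LN13 Lst13 by linarith+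
lemma LN15: "(541580784063/200000000000::real) \<le> ln 15" "ln 15 \<le> (2710155959371/1000000000000::real)" using LN14 Lst14 by linarith+
lemma LN16: "(554488487047/200000000000::real) \<le> ln 16" "ln 16 \<le> (43354608851/15625000000::real)" using LN15 Lst15 by linarith+
lemma LN17: "(2833067052503/1000000000000::real) \<le> ln 17" "ln 17 \<le> (11075468619/3906250000::real)" using LN16 Lst16 by linarith+
lemma LN18: "(1445112731477/500000000000::real) \<le> ln 18" "ln 18 \<le> (1446239339503/500000000000::real)" using LN17 Lst17 by linarith+
lemma LN19: "(1472146340829/500000000000::real) \<le> ln 19" "ln 19 \<le> (736636534831/250000000000::real)" using LN18 Lst18 by linarith+
lemma LN20: "(2995585974073/1000000000000::real) \<le> ln 20" "ln 20 \<le> (1498919813641/500000000000::real)" using LN19 Lst19 by linarith+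
lemma LN21: "(1522188068353/500000000000::real) \<le> ln 21" "ln 21 \<le> (3046629949863/1000000000000::real)" using LN20 Lst20 by linarith+
lemma LN22: "(309089615113/100000000000::real) \<le> ln 22" "ln 22 \<le> (3020654391/976562500::real)" using LN21 Lst21 by linarith+
lemma LN23: "(97979622273/31250000000::real) \<le> ln 23" "ln 23 \<le> (1568800984021/500000000000::real)" using LN22 Lst22 by linarith+
lemma LN24: "(3177907526379/1000000000000::real) \<le> ln 24" "ln 24 \<le> (636032334821/200000000000::real)" using LN23 Lst23 by linarith+
lemma LN25: "(3218729520269/1000000000000::real) \<le> ln 25" "ln 25 \<le> (1610491873089/500000000000::real)" using LN24 Lst24 by linarith+
lemma LN26: "(1628975116453/500000000000::real) \<le> ln 26" "ln 26 \<le> (3260204525399/1000000000000::real)" using LN25 Lst25 by linarith+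
lemma LN27: "(3295690560463/1000000000000::real) \<le> ln 27" "ln 27 \<le> (659588982003/200000000000::real)" using LN26 Lst26 by linarith+
lemma LN28: "(83301455107/25000000000::real) \<le> ln 28" "ln 28 \<le> (333431260301/100000000000::real)" using LN27 Lst27 by linarith+
lemma LN29: "(673429904759/200000000000::real) \<le> ln 29" "ln 29 \<le> (3369403965137/1000000000000::real)" using LN28 Lst28 by linarith+
lemma LN30: "(3401051075221/1000000000000::real) \<le> ln 30" "ln 30 \<le> (3403305553669/1000000000000::real)" using LN29 Lst29 by linarith+
lemma LN31: "(3433840897833/1000000000000::real) \<le> ln 31" "ln 31 \<le> (1718047704371/500000000000::real)" using LN30 Lst30 by linarith+
lemma LN32: "(54149837437/15625000000::real) \<le> ln 32" "ln 32 \<le> (1733922067699/500000000000::real)" using LN31 Lst31 by linarith+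
lemma LN33: "(3496361254481/1000000000000::real) \<le> ln 33" "ln 33 \<le> (54665872173/15625000000::real)" using LN32 Lst32 by linarith+
lemma LN34: "(1763107108749/500000000000::real) \<le> ln 34" "ln 34 \<le> (3528468804371/1000000000000::real)" using LN33 Lst33 by linarith+
lemma LN35: "(3555201754257/1000000000000::real) \<le> ln 35" "ln 35 \<le> (3557456360933/1000000000000::real)" using LN34 Lst34 by linarith+
lemma LN36: "(28666981049/8000000000::real) \<le> ln 36" "ln 36 \<le> (179281362773/50000000000::real)" using LN35 Lst35 by linarith+
lemma LN37: "(3610771605227/1000000000000::real) \<le> ln 37" "ln 37 \<le> (3613026245359/1000000000000::real)" using LN36 Lst36 by linarith+
lemma LN38: "(1818719926117/500000000000::real) \<le> ln 38" "ln 38 \<le> (3639694506541/1000000000000::real)" using LN37 Lst37 by linarith+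
lemma LN39: "(3663415338571/1000000000000::real) \<le> ln 39" "ln 39 \<le> (1832835002817/500000000000::real)" using LN38 Lst38 by linarith+
lemma LN40: "(3688733146497/1000000000000::real) \<le> ln 40" "ln 40 \<le> (369098782507/100000000000::real)" using LN39 Lst39 by linarith+
lemma LN41: "(928356439759/250000000000::real) \<le> ln 41" "ln 41 \<le> (3715680448021/1000000000000::real)" using LN40 Lst40 by linarith+
lemma Sb2: "(5/4::real) \<le> S 2" "S 2 \<le> (5/4::real)"
proof -
  have t: "totient 2 = 1" by code_simp
  have "S 2 = S 1 + (1/4::real)" using S_num[of 2] t by simp
  thus "(5/4::real) \<le> S 2" "S 2 \<le> (5/4::real)" using S1 by simp_all
qed
lemma Sb3: "(736111111111/500000000000::real) \<le> S 3" "S 3 \<le> (1472222222223/1000000000000::real)"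
proof -
  have t: "totient 3 = 2" by code_simp
  have "S 3 = S 2 + (2/9::real)" using S_num[of 3] t by simp
  thus "(736111111111/500000000000::real) \<le> S 3" "S 3 \<le> (1472222222223/1000000000000::real)" using Sb2 by simp_all
qed
lemma Sb4: "(798611111111/500000000000::real) \<le> S 4" "S 4 \<le> (1597222222223/1000000000000::real)"
proof -
  have t: "totient 4 = 2" by code_simp
  have "S 4 = S 3 + (1/8::real)" using S_num[of 4] t by simp
  thus "(798611111111/500000000000::real) \<le> S 4" "S 4 \<le> (1597222222223/1000000000000::real)" using Sb3 by simp_all
qed
lemma Sb5: "(878611111111/500000000000::real) \<le> S 5" "S 5 \<le> (1757222222223/1000000000000::real)"
proof -
  have t: "totient 5 = 4" by code_simp
  have "S 5 = S 4 + (4/25::real)" using S_num[of 5] t by simp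
  thus "(878611111111/500000000000::real) \<le> S 5" "S 5 \<le> (1757222222223/1000000000000::real)" using Sb4 by simp_all
qed
lemma Sb6: "(1812777777777/1000000000000::real) \<le> S 6" "S 6 \<le> (1812777777779/1000000000000::real)"
proof -
  have t: "totient 6 = 2" by code_simp
  have "S 6 = S 5 + (1/18::real)" using S_num[of 6] t by simp
  thus "(1812777777777/1000000000000::real) \<le> S 6" "S 6 \<le> (1812777777779/1000000000000::real)" using Sb5 by simp_all
qed
lemma Sb7: "(241903344671/125000000000::real) \<le> S 7" "S 7 \<le> (1935226757371/1000000000000::real)"
proof -
  have t: "totient 7 = 6" by code_simp
  have "S 7 = S 6 + (6/49::real)" using S_num[of 7] t by simp
  thus "(241903344671/125000000000::real) \<le> S 7" "S 7 \<le> (1935226757371/1000000000000::real)" using Sb6 by simp_all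
qed
lemma Sb8: "(249715844671/125000000000::real) \<le> S 8" "S 8 \<le> (1997726757371/1000000000000::real)"
proof -
  have t: "totient 8 = 4" by code_simp
  have "S 8 = S 7 + (1/16::real)" using S_num[of 8] t by simp
  thus "(249715844671/125000000000::real) \<le> S 8" "S 8 \<le> (1997726757371/1000000000000::real)" using Sb7 by simp_all
qed
lemma Sb9: "(1035900415721/500000000000::real) \<le> S 9" "S 9 \<le> (1035900415723/500000000000::real)"
proof -
  have t: "totient 9 = 6" by code_simp
  have "S 9 = S 8 + (2/27::real)" using S_num[of 9] t by simp
  thus "(1035900415721/500000000000::real) \<le> S 9" "S 9 \<le> (1035900415723/500000000000::real)" using Sb8 by simp_all
qed
lemma Sb10: "(1055900415721/500000000000::real) \<le> S 10" "S 10 \<le> (1055900415723/500000000000::real)"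
proof -
  have t: "totient 10 = 4" by code_simp
  have "S 10 = S 9 + (1/25::real)" using S_num[of 10] t by simp
  thus "(1055900415721/500000000000::real) \<le> S 10" "S 10 \<le> (1055900415723/500000000000::real)" using Sb9 by simp_all
qed
lemma Sb11: "(2194445459541/1000000000000::real) \<le> S 11" "S 11 \<le> (1097222729773/500000000000::real)"
proof -
  have t: "totient 11 = 10" by code_simp
  have "S 11 = S 10 + (10/121::real)" using S_num[of 11] t by simp
  thus "(2194445459541/1000000000000::real) \<le> S 11" "S 11 \<le> (1097222729773/500000000000::real)" using Sb10 by simp_all
qed
lemma Sb12: "(1111111618659/500000000000::real) \<le> S 12" "S 12 \<le> (555555809331/250000000000::real)"
proof -
  have t: "totient 12 = 4" by code_simp
  have "S 12 = S 11 + (1/36::real)" using S_num[of 12] t by simp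
  thus "(1111111618659/500000000000::real) \<le> S 12" "S 12 \<le> (555555809331/250000000000::real)" using Sb11 by simp_all
qed
lemma Sb13: "(2293229154477/1000000000000::real) \<le> S 13" "S 13 \<le> (573307288621/250000000000::real)"
proof -
  have t: "totient 13 = 12" by code_simp
  have "S 13 = S 12 + (12/169::real)" using S_num[of 13] t by simp
  thus "(2293229154477/1000000000000::real) \<le> S 13" "S 13 \<le> (573307288621/250000000000::real)" using Sb12 by simp_all
qed
lemma Sb14: "(1161920699687/500000000000::real) \<le> S 14" "S 14 \<le> (1161920699691/500000000000::real)"
proof -
  have t: "totient 14 = 6" by code_simp
  have "S 14 = S 13 + (3/98::real)" using S_num[of 14] t by simp
  thus "(1161920699687/500000000000::real) \<le> S 14" "S 14 \<le> (1161920699691/500000000000::real)" using Sb13 by simp_all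
qed
lemma Sb15: "(2359396954929/1000000000000::real) \<le> S 15" "S 15 \<le> (1179698477469/500000000000::real)"
proof -
  have t: "totient 15 = 8" by code_simp
  have "S 15 = S 14 + (8/225::real)" using S_num[of 15] t by simp
  thus "(2359396954929/1000000000000::real) \<le> S 15" "S 15 \<le> (1179698477469/500000000000::real)" using Sb14 by simp_all
qed
lemma Sb16: "(2390646954929/1000000000000::real) \<le> S 16" "S 16 \<le> (1195323477469/500000000000::real)"
proof -
  have t: "totient 16 = 8" by code_simp
  have "S 16 = S 15 + (1/32::real)" using S_num[of 16] t by simp
  thus "(2390646954929/1000000000000::real) \<le> S 16" "S 16 \<le> (1195323477469/500000000000::real)" using Sb15 by simp_all
qed
lemma Sb17: "(305751284591/125000000000::real) \<le> S 17" "S 17 \<le> (1223005138369/500000000000::real)"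
proof -
  have t: "totient 17 = 16" by code_simp
  have "S 17 = S 16 + (16/289::real)" using S_num[of 17] t by simp
  thus "(305751284591/125000000000::real) \<le> S 17" "S 17 \<le> (1223005138369/500000000000::real)" using Sb16 by simp_all
qed
lemma Sb18: "(1232264397623/500000000000::real) \<le> S 18" "S 18 \<le> (2464528795257/1000000000000::real)"
proof -
  have t: "totient 18 = 6" by code_simp
  have "S 18 = S 17 + (1/54::real)" using S_num[of 18] t by simp
  thus "(1232264397623/500000000000::real) \<le> S 18" "S 18 \<le> (2464528795257/1000000000000::real)" using Sb17 by simp_all
qed
lemma Sb19: "(251439029109/100000000000::real) \<le> S 19" "S 19 \<le> (1257195145551/500000000000::real)"
proof -
  have t: "totient 19 = 18" by code_simp
  have "S 19 = S 18 + (18/361::real)" using S_num[of 19] t by simp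
  thus "(251439029109/100000000000::real) \<le> S 19" "S 19 \<le> (1257195145551/500000000000::real)" using Sb18 by simp_all
qed
lemma Sb20: "(253439029109/100000000000::real) \<le> S 20" "S 20 \<le> (1267195145551/500000000000::real)"
proof -
  have t: "totient 20 = 8" by code_simp
  have "S 20 = S 19 + (1/50::real)" using S_num[of 20] t by simp
  thus "(253439029109/100000000000::real) \<le> S 20" "S 20 \<le> (1267195145551/500000000000::real)" using Sb19 by simp_all
qed
lemma Sb21: "(2561601175443/1000000000000::real) \<le> S 21" "S 21 \<le> (80050036733/31250000000::real)"
proof -
  have t: "totient 21 = 12" by code_simp
  have "S 21 = S 20 + (4/147::real)" using S_num[of 21] t by simp
  thus "(2561601175443/1000000000000::real) \<le> S 21" "S 21 \<le> (80050036733/31250000000::real)" using Sb20 by simp_all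
qed
lemma Sb22: "(2582262332467/1000000000000::real) \<le> S 22" "S 22 \<le> (2582262332481/1000000000000::real)"
proof -
  have t: "totient 22 = 10" by code_simp
  have "S 22 = S 21 + (5/242::real)" using S_num[of 22] t by simp
  thus "(2582262332467/1000000000000::real) \<le> S 22" "S 22 \<le> (2582262332481/1000000000000::real)" using Sb21 by simp_all
qed
lemma Sb23: "(327981279271/125000000000::real) \<le> S 23" "S 23 \<le> (2623850234183/1000000000000::real)"
proof -
  have t: "totient 23 = 22" by code_simp
  have "S 23 = S 22 + (22/529::real)" using S_num[of 23] t by simp
  thus "(327981279271/125000000000::real) \<le> S 23" "S 23 \<le> (2623850234183/1000000000000::real)" using Sb22 by simp_all
qed
lemma Sb24: "(164858695191/62500000000::real) \<le> S 24" "S 24 \<le> (20607336899/7812500000::real)"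
proof -
  have t: "totient 24 = 8" by code_simp
  have "S 24 = S 23 + (1/72::real)" using S_num[of 24] t by simp
  thus "(164858695191/62500000000::real) \<le> S 24" "S 24 \<le> (20607336899/7812500000::real)" using Sb23 by simp_all
qed
lemma Sb25: "(166858695191/62500000000::real) \<le> S 25" "S 25 \<le> (20857336899/7812500000::real)"
proof -
  have t: "totient 25 = 20" by code_simp
  have "S 25 = S 24 + (4/125::real)" using S_num[of 25] t by simp
  thus "(166858695191/62500000000::real) \<le> S 25" "S 25 \<le> (20857336899/7812500000::real)" using Sb24 by simp_all
qed
lemma Sb26: "(537498120469/200000000000::real) \<le> S 26" "S 26 \<le> (1343745301181/500000000000::real)"
proof -
  have t: "totient 26 = 12" by code_simp
  have "S 26 = S 25 + (3/169::real)" using S_num[of 26] t by simp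
  thus "(537498120469/200000000000::real) \<le> S 26" "S 26 \<le> (1343745301181/500000000000::real)" using Sb25 by simp_all
qed
lemma Sb27: "(2712181960369/1000000000000::real) \<le> S 27" "S 27 \<le> (2712181960387/1000000000000::real)"
proof -
  have t: "totient 27 = 18" by code_simp
  have "S 27 = S 26 + (2/81::real)" using S_num[of 27] t by simp
  thus "(2712181960369/1000000000000::real) \<le> S 27" "S 27 \<le> (2712181960387/1000000000000::real)" using Sb26 by simp_all
qed
lemma Sb28: "(2727488082817/1000000000000::real) \<le> S 28" "S 28 \<le> (681872020709/250000000000::real)"
proof -
  have t: "totient 28 = 12" by code_simp
  have "S 28 = S 27 + (3/196::real)" using S_num[of 28] t by simp
  thus "(2727488082817/1000000000000::real) \<le> S 28" "S 28 \<le> (681872020709/250000000000::real)" using Sb27 by simp_all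
qed
lemma Sb29: "(552156356159/200000000000::real) \<le> S 29" "S 29 \<le> (552156356163/200000000000::real)"
proof -
  have t: "totient 29 = 28" by code_simp
  have "S 29 = S 28 + (28/841::real)" using S_num[of 29] t by simp
  thus "(552156356159/200000000000::real) \<le> S 29" "S 29 \<le> (552156356163/200000000000::real)" using Sb28 by simp_all
qed
lemma Sb30: "(2769670669683/1000000000000::real) \<le> S 30" "S 30 \<le> (346208833713/125000000000::real)"
proof -
  have t: "totient 30 = 8" by code_simp
  have "S 30 = S 29 + (2/225::real)" using S_num[of 30] t by simp
  thus "(2769670669683/1000000000000::real) \<le> S 30" "S 30 \<le> (346208833713/125000000000::real)" using Sb29 by simp_all
qed
lemma Sb31: "(175055509467/62500000000::real) \<le> S 31" "S 31 \<le> (1400444075747/500000000000::real)"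
proof -
  have t: "totient 31 = 30" by code_simp
  have "S 31 = S 30 + (30/961::real)" using S_num[of 31] t by simp
  thus "(175055509467/62500000000::real) \<le> S 31" "S 31 \<le> (1400444075747/500000000000::real)" using Sb30 by simp_all
qed
lemma Sb32: "(176032071967/62500000000::real) \<le> S 32" "S 32 \<le> (1408256575747/500000000000::real)"
proof -
  have t: "totient 32 = 16" by code_simp
  have "S 32 = S 31 + (1/64::real)" using S_num[of 32] t by simp
  thus "(176032071967/62500000000::real) \<le> S 32" "S 32 \<le> (1408256575747/500000000000::real)" using Sb31 by simp_all
qed
lemma Sb33: "(1417439312191/500000000000::real) \<le> S 33" "S 33 \<le> (566975724881/200000000000::real)"
proof -
  have t: "totient 33 = 20" by code_simp
  have "S 33 = S 32 + (20/1089::real)" using S_num[of 33] t by simp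
  thus "(1417439312191/500000000000::real) \<le> S 33" "S 33 \<le> (566975724881/200000000000::real)" using Sb32 by simp_all
qed
lemma Sb34: "(2848719454831/1000000000000::real) \<le> S 34" "S 34 \<le> (569743890971/200000000000::real)"
proof -
  have t: "totient 34 = 16" by code_simp
  have "S 34 = S 33 + (4/289::real)" using S_num[of 34] t by simp
  thus "(2848719454831/1000000000000::real) \<le> S 34" "S 34 \<le> (569743890971/200000000000::real)" using Sb33 by simp_all
qed
lemma Sb35: "(573662258313/200000000000::real) \<le> S 35" "S 35 \<le> (286831129159/100000000000::real)"
proof -
  have t: "totient 35 = 24" by code_simp
  have "S 35 = S 34 + (24/1225::real)" using S_num[of 35] t by simp
  thus "(573662258313/200000000000::real) \<le> S 35" "S 35 \<le> (286831129159/100000000000::real)" using Sb34 by simp_all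
qed
lemma Sb36: "(359696318853/125000000000::real) \<le> S 36" "S 36 \<le> (57551411017/20000000000::real)"
proof -
  have t: "totient 36 = 12" by code_simp
  have "S 36 = S 35 + (1/108::real)" using S_num[of 36] t by simp
  thus "(359696318853/125000000000::real) \<le> S 36" "S 36 \<le> (57551411017/20000000000::real)" using Sb35 by simp_all
qed
lemma Sb37: "(2903867117661/1000000000000::real) \<le> S 37" "S 37 \<le> (362983389711/125000000000::real)"
proof -
  have t: "totient 37 = 36" by code_simp
  have "S 37 = S 36 + (36/1369::real)" using S_num[of 37] t by simp
  thus "(2903867117661/1000000000000::real) \<le> S 37" "S 37 \<le> (362983389711/125000000000::real)" using Sb36 by simp_all
qed
lemma Sb38: "(1458166245811/500000000000::real) \<le> S 38" "S 38 \<le> (58326649833/20000000000::real)"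
proof -
  have t: "totient 38 = 18" by code_simp
  have "S 38 = S 37 + (9/722::real)" using S_num[of 38] t by simp
  thus "(1458166245811/500000000000::real) \<le> S 38" "S 38 \<le> (58326649833/20000000000::real)" using Sb37 by simp_all
qed
lemma Sb39: "(733027896081/250000000000::real) \<le> S 39" "S 39 \<le> (2932111584353/1000000000000::real)"
proof -
  have t: "totient 39 = 24" by code_simp
  have "S 39 = S 38 + (8/507::real)" using S_num[of 39] t by simp
  thus "(733027896081/250000000000::real) \<le> S 39" "S 39 \<le> (2932111584353/1000000000000::real)" using Sb38 by simp_all
qed
lemma Sb40: "(735527896081/250000000000::real) \<le> S 40" "S 40 \<le> (2942111584353/1000000000000::real)"
proof -
  have t: "totient 40 = 16" by code_simp
  have "S 40 = S 39 + (1/100::real)" using S_num[of 40] t by simp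
  thus "(735527896081/250000000000::real) \<le> S 40" "S 40 \<le> (2942111584353/1000000000000::real)" using Sb39 by simp_all
qed
lemma Tb2: "(5/4::real) \<le> T 2" "T 2 \<le> (5/4::real)"
  using T_num[of 2] T1 by simp_all
lemma Tb3: "(1361111111111/1000000000000::real) \<le> T 3" "T 3 \<le> (170138888889/125000000000::real)"
  using T_num[of 3] Tb2 by simp_all
lemma Tb4: "(1423611111111/1000000000000::real) \<le> T 4" "T 4 \<le> (177951388889/125000000000::real)"
  using T_num[of 4] Tb3 by simp_all
lemma Tb5: "(1463611111111/1000000000000::real) \<le> T 5" "T 5 \<le> (182951388889/125000000000::real)"
  using T_num[of 5] Tb4 by simp_all
lemma Tb6: "(186423611111/125000000000::real) \<le> T 6" "T 6 \<le> (149138888889/100000000000::real)"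
  using T_num[of 6] Tb5 by simp_all
lemma Tb7: "(1511797052153/1000000000000::real) \<le> T 7" "T 7 \<le> (377949263039/250000000000::real)"
  using T_num[of 7] Tb6 by simp_all
lemma Tb8: "(1527422052153/1000000000000::real) \<le> T 8" "T 8 \<le> (381855513039/250000000000::real)"
  using T_num[of 8] Tb7 by simp_all
lemma Tb9: "(307953546233/200000000000::real) \<le> T 9" "T 9 \<le> (1539767731169/1000000000000::real)"
  using T_num[of 9] Tb8 by simp_all
lemma Tb10: "(309953546233/200000000000::real) \<le> T 10" "T 10 \<le> (1549767731169/1000000000000::real)"
  using T_num[of 10] Tb9 by simp_all
lemma Tb11: "(779016096987/500000000000::real) \<le> T 11" "T 11 \<le> (1558032193979/1000000000000::real)"
  using T_num[of 11] Tb10 by simp_all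
lemma Tb12: "(782488319209/500000000000::real) \<le> T 12" "T 12 \<le> (195622079803/125000000000::real)"
  using T_num[of 12] Tb11 by simp_all
lemma Tb13: "(1570893798181/1000000000000::real) \<le> T 13" "T 13 \<le> (392723449547/250000000000::real)"
  using T_num[of 13] Tb12 by simp_all
lemma Tb14: "(1575995838997/1000000000000::real) \<le> T 14" "T 14 \<le> (315199167801/200000000000::real)"
  using T_num[of 14] Tb13 by simp_all
lemma Tb15: "(1580440283441/1000000000000::real) \<le> T 15" "T 15 \<le> (31608805669/20000000000::real)"
  using T_num[of 15] Tb14 by simp_all
lemma Tb16: "(1584346533441/1000000000000::real) \<le> T 16" "T 16 \<le> (31686930669/20000000000::real)"
  using T_num[of 16] Tb15 by simp_all
lemma Tb17: "(1587806741053/1000000000000::real) \<le> T 17" "T 17 \<le> (1587806741063/1000000000000::real)"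
  using T_num[of 17] Tb16 by simp_all
lemma Tb18: "(795446580403/500000000000::real) \<le> T 18" "T 18 \<le> (1590893160817/1000000000000::real)"
  using T_num[of 18] Tb17 by simp_all
lemma Tb19: "(398415810977/250000000000::real) \<le> T 19" "T 19 \<le> (19920790549/12500000000::real)"
  using T_num[of 19] Tb18 by simp_all
lemma Tb20: "(399040810977/250000000000::real) \<le> T 20" "T 20 \<le> (19952040549/12500000000::real)"
  using T_num[of 20] Tb19 by simp_all
lemma Tb21: "(399607704401/250000000000::real) \<le> T 21" "T 21 \<le> (1598430817617/1000000000000::real)"
  using T_num[of 21] Tb20 by simp_all
lemma Tb22: "(800248466653/500000000000::real) \<le> T 22" "T 22 \<le> (40012423333/25000000000::real)"
  using T_num[of 22] Tb21 by simp_all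
lemma Tb23: "(801193646237/500000000000::real) \<le> T 23" "T 23 \<le> (1602387292489/1000000000000::real)"
  using T_num[of 23] Tb22 by simp_all
lemma Tb24: "(320824680717/200000000000::real) \<le> T 24" "T 24 \<le> (1604123403601/1000000000000::real)"
  using T_num[of 24] Tb23 by simp_all
lemma Tb25: "(321144680717/200000000000::real) \<le> T 25" "T 25 \<le> (1605723403601/1000000000000::real)"
  using T_num[of 25] Tb24 by simp_all
lemma Tb26: "(64288107741/40000000000::real) \<le> T 26" "T 26 \<le> (803601346771/500000000000::real)"
  using T_num[of 26] Tb25 by simp_all
lemma Tb27: "(1608574435637/1000000000000::real) \<le> T 27" "T 27 \<le> (321714887131/200000000000::real)"
  using T_num[of 27] Tb26 by simp_all
lemma Tb28: "(1609849945841/1000000000000::real) \<le> T 28" "T 28 \<le> (80492497293/50000000000::real)"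
  using T_num[of 28] Tb27 by simp_all
lemma Tb29: "(1611039006483/1000000000000::real) \<le> T 29" "T 29 \<le> (1611039006503/1000000000000::real)"
  using T_num[of 29] Tb28 by simp_all
lemma Tb30: "(806075058797/500000000000::real) \<le> T 30" "T 30 \<le> (322430023523/200000000000::real)"
  using T_num[of 30] Tb29 by simp_all
lemma Tb31: "(10082441877/6250000000::real) \<le> T 31" "T 31 \<le> (806595350171/500000000000::real)"
  using T_num[of 31] Tb30 by simp_all
lemma Tb32: "(80708363141/50000000000::real) \<le> T 32" "T 32 \<le> (807083631421/500000000000::real)"
  using T_num[of 32] Tb31 by simp_all
lemma Tb33: "(323017107293/200000000000::real) \<le> T 33" "T 33 \<le> (201885692061/125000000000::real)"
  using T_num[of 33] Tb32 by simp_all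
lemma Tb34: "(100996911773/62500000000::real) \<le> T 34" "T 34 \<le> (201993823549/125000000000::real)"
  using T_num[of 34] Tb33 by simp_all
lemma Tb35: "(808383457449/500000000000::real) \<le> T 35" "T 35 \<le> (1616766914923/1000000000000::real)"
  using T_num[of 35] Tb34 by simp_all
lemma Tb36: "(404384629959/250000000000::real) \<le> T 36" "T 36 \<le> (808769259931/500000000000::real)"
  using T_num[of 36] Tb35 by simp_all
lemma Tb37: "(64730759201/40000000000::real) \<le> T 37" "T 37 \<le> (404567245013/250000000000::real)"
  using T_num[of 37] Tb36 by simp_all
lemma Tb38: "(505925469/312500000::real) \<le> T 38" "T 38 \<le> (404740375207/250000000000::real)"
  using T_num[of 38] Tb37 by simp_all
lemma Tb39: "(323923792599/200000000000::real) \<le> T 39" "T 39 \<le> (101226185189/62500000000::real)"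
  using T_num[of 39] Tb38 by simp_all
lemma Tb40: "(324048792599/200000000000::real) \<le> T 40" "T 40 \<le> (101265247689/62500000000::real)"
  using T_num[of 40] Tb39 by simp_all
lemma Kb2: "(134751418087/125000000000::real) \<le> K 2" "K 2 \<le> (539338420141/500000000000::real)"
proof -
  have e: "K 2 = K 1 + 1 / 2 - ia * T 1 * (ln 2)" using K_num[of 1] by (simp add: numeral_2_eq_2)
  have p: "(6079027/10000000::real) * (1/1::real) * (346538319141/500000000000::real) \<le> ia * T 1 * (ln 2)" "ia * T 1 * (ln 2) \<le> (30397/50000::real) * (1/1::real) * (694128787879/1000000000000::real)"
    subgoal by (rule prod3_lo) (use ia_fr T1 LN2 in linarith)+
    subgoal by (rule prod3_hi) (use ia_fr T1 LN2 in linarith)+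
    done
  show "(134751418087/125000000000::real) \<le> K 2" "K 2 \<le> (539338420141/500000000000::real)" using e p K1 by linarith+
qed
lemma Kb3: "(1102625146779/1000000000000::real) \<le> K 3" "K 3 \<le> (55197568647/50000000000::real)"
proof -
  have e: "K 3 = K 2 + 1 / 3 - ia * T 2 * (ln 3 - ln 2)" using K_num[of 2] by (simp)
  have p: "(6079027/10000000::real) * (5/4::real) * (15/37::real) \<le> ia * T 2 * (ln 3 - ln 2)" "ia * T 2 * (ln 3 - ln 2) \<le> (30397/50000::real) * (5/4::real) * (13/32::real)"
    subgoal by (rule prod3_lo) (use ia_fr Tb2 Lst2 in linarith)+
    subgoal by (rule prod3_hi) (use ia_fr Tb2 Lst2 in linarith)+
    done
  show "(1102625146779/1000000000000::real) \<le> K 3" "K 3 \<le> (55197568647/50000000000::real)" using e p Kb2 by linarith+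
qed
lemma Kb4: "(278603241661/250000000000::real) \<le> K 4" "K 4 \<le> (1115925544059/1000000000000::real)"
proof -
  have e: "K 4 = K 3 + 1 / 4 - ia * T 3 * (ln 4 - ln 3)" using K_num[of 3] by (simp)
  have p: "(6079027/10000000::real) * (1361111111111/1000000000000::real) * (21/73::real) \<le> ia * T 3 * (ln 4 - ln 3)" "ia * T 3 * (ln 4 - ln 3) \<le> (30397/50000::real) * (170138888889/125000000000::real) * (19/66::real)"
    subgoal by (rule prod3_lo) (use ia_fr Tb3 Lst3 in linarith)+
    subgoal by (rule prod3_hi) (use ia_fr Tb3 Lst3 in linarith)+
    done
  show "(278603241661/250000000000::real) \<le> K 4" "K 4 \<le> (1115925544059/1000000000000::real)" using e p Kb3 by linarith+
qed
lemma Kb5: "(140153458473/125000000000::real) \<le> K 5" "K 5 \<le> (35087998657/31250000000::real)"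
proof -
  have e: "K 5 = K 4 + 1 / 5 - ia * T 4 * (ln 5 - ln 4)" using K_num[of 4] by (simp)
  have p: "(6079027/10000000::real) * (1423611111111/1000000000000::real) * (27/121::real) \<le> ia * T 4 * (ln 5 - ln 4)" "ia * T 4 * (ln 5 - ln 4) \<le> (30397/50000::real) * (177951388889/125000000000::real) * (25/112::real)"
    subgoal by (rule prod3_lo) (use ia_fr Tb4 Lst4 in linarith)+
    subgoal by (rule prod3_hi) (use ia_fr Tb4 Lst4 in linarith)+
    done
  show "(140153458473/125000000000::real) \<le> K 5" "K 5 \<le> (35087998657/31250000000::real)" using e p Kb4 by linarith+
qed
lemma Kb6: "(1125638923241/1000000000000::real) \<le> K 6" "K 6 \<le> (45090643329/40000000000::real)"
proof -
  have e: "K 6 = K 5 + 1 / 6 - ia * T 5 * (ln 6 - ln 5)" using K_num[of 5] by (simp)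
  have p: "(6079027/10000000::real) * (1463611111111/1000000000000::real) * (33/181::real) \<le> ia * T 5 * (ln 6 - ln 5)" "ia * T 5 * (ln 6 - ln 5) \<le> (30397/50000::real) * (182951388889/125000000000::real) * (31/170::real)"
    subgoal by (rule prod3_lo) (use ia_fr Tb5 Lst5 in linarith)+
    subgoal by (rule prod3_hi) (use ia_fr Tb5 Lst5 in linarith)+
    done
  show "(1125638923241/1000000000000::real) \<le> K 6" "K 6 \<le> (45090643329/40000000000::real)" using e p Kb5 by linarith+
qed
lemma Kb7: "(1128717009593/1000000000000::real) \<le> K 7" "K 7 \<le> (565183838417/500000000000::real)"
proof -
  have e: "K 7 = K 6 + 1 / 7 - ia * T 6 * (ln 7 - ln 6)" using K_num[of 6] by (simp)
  have p: "(6079027/10000000::real) * (186423611111/125000000000::real) * (39/253::real) \<le> ia * T 6 * (ln 7 - ln 6)" "ia * T 6 * (ln 7 - ln 6) \<le> (30397/50000::real) * (149138888889/100000000000::real) * (37/240::real)"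
    subgoal by (rule prod3_lo) (use ia_fr Tb6 Lst6 in linarith)+
    subgoal by (rule prod3_hi) (use ia_fr Tb6 Lst6 in linarith)+
    done
  show "(1128717009593/1000000000000::real) \<le> K 7" "K 7 \<le> (565183838417/500000000000::real)" using e p Kb6 by linarith+
qed
lemma Kb8: "(1130982470167/1000000000000::real) \<le> K 8" "K 8 \<le> (1132649136943/1000000000000::real)"
proof -
  have e: "K 8 = K 7 + 1 / 8 - ia * T 7 * (ln 8 - ln 7)" using K_num[of 7] by (simp)
  have p: "(6079027/10000000::real) * (1511797052153/1000000000000::real) * (45/337::real) \<le> ia * T 7 * (ln 8 - ln 7)" "ia * T 7 * (ln 8 - ln 7) \<le> (30397/50000::real) * (377949263039/250000000000::real) * (43/322::real)"
    subgoal by (rule prod3_lo) (use ia_fr Tb7 Lst7 in linarith)+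
    subgoal by (rule prod3_hi) (use ia_fr Tb7 Lst7 in linarith)+
    done
  show "(1130982470167/1000000000000::real) \<le> K 8" "K 8 \<le> (1132649136943/1000000000000::real)" using e p Kb7 by linarith+
qed
lemma Kb9: "(8849355143/7812500000::real) \<le> K 9" "K 9 \<le> (567197995313/500000000000::real)"
proof -
  have e: "K 9 = K 8 + 1 / 9 - ia * T 8 * (ln 9 - ln 8)" using K_num[of 8] by (simp)
  have p: "(6079027/10000000::real) * (1527422052153/1000000000000::real) * (51/433::real) \<le> ia * T 8 * (ln 9 - ln 8)" "ia * T 8 * (ln 9 - ln 8) \<le> (30397/50000::real) * (381855513039/250000000000::real) * (49/416::real)"
    subgoal by (rule prod3_lo) (use ia_fr Tb8 Lst8 in linarith)+
    subgoal by (rule prod3_hi) (use ia_fr Tb8 Lst8 in linarith)+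
    done
  show "(8849355143/7812500000::real) \<le> K 9" "K 9 \<le> (567197995313/500000000000::real)" using e p Kb8 by linarith+
qed
lemma Kb10: "(1134087665781/1000000000000::real) \<le> K 10" "K 10 \<le> (283943891009/250000000000::real)"
proof -
  have e: "K 10 = K 9 + 1 / 10 - ia * T 9 * (ln 10 - ln 9)" using K_num[of 9] by (simp)
  have p: "(6079027/10000000::real) * (307953546233/200000000000::real) * (57/541::real) \<le> ia * T 9 * (ln 10 - ln 9)" "ia * T 9 * (ln 10 - ln 9) \<le> (30397/50000::real) * (1539767731169/1000000000000::real) * (55/522::real)"
    subgoal by (rule prod3_lo) (use ia_fr Tb9 Lst9 in linarith)+
    subgoal by (rule prod3_hi) (use ia_fr Tb9 Lst9 in linarith)+
    done
  show "(1134087665781/1000000000000::real) \<le> K 10" "K 10 \<le> (283943891009/250000000000::real)" using e p Kb9 by linarith+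
qed
lemma Kb11: "(1135196579403/1000000000000::real) \<le> K 11" "K 11 \<le> (14211152679/12500000000::real)"
proof -
  have e: "K 11 = K 10 + 1 / 11 - ia * T 10 * (ln 11 - ln 10)" using K_num[of 10] by (simp)
  have p: "(6079027/10000000::real) * (309953546233/200000000000::real) * (63/661::real) \<le> ia * T 10 * (ln 11 - ln 10)" "ia * T 10 * (ln 11 - ln 10) \<le> (30397/50000::real) * (1549767731169/1000000000000::real) * (61/640::real)"
    subgoal by (rule prod3_lo) (use ia_fr Tb10 Lst10 in linarith)+
    subgoal by (rule prod3_hi) (use ia_fr Tb10 Lst10 in linarith)+
    done
  show "(1135196579403/1000000000000::real) \<le> K 11" "K 11 \<le> (14211152679/12500000000::real)" using e p Kb10 by linarith+
qed
lemma Kb12: "(1136112073561/1000000000000::real) \<le> K 12" "K 12 \<le> (1137814316329/1000000000000::real)"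
proof -
  have e: "K 12 = K 11 + 1 / 12 - ia * T 11 * (ln 12 - ln 11)" using K_num[of 11] by (simp)
  have p: "(6079027/10000000::real) * (779016096987/500000000000::real) * (69/793::real) \<le> ia * T 11 * (ln 12 - ln 11)" "ia * T 11 * (ln 12 - ln 11) \<le> (30397/50000::real) * (1558032193979/1000000000000::real) * (67/770::real)"
    subgoal by (rule prod3_lo) (use ia_fr Tb11 Lst11 in linarith)+
    subgoal by (rule prod3_hi) (use ia_fr Tb11 Lst11 in linarith)+
    done
  show "(1136112073561/1000000000000::real) \<le> K 12" "K 12 \<le> (1137814316329/1000000000000::real)" using e p Kb11 by linarith+
qed
lemma Kb13: "(568440235043/500000000000::real) \<le> K 13" "K 13 \<le> (569294249297/500000000000::real)"
proof -
  have e: "K 13 = K 12 + 1 / 13 - ia * T 12 * (ln 13 - ln 12)" using K_num[of 12] by (simp)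
  have p: "(6079027/10000000::real) * (782488319209/500000000000::real) * (75/937::real) \<le> ia * T 12 * (ln 13 - ln 12)" "ia * T 12 * (ln 13 - ln 12) \<le> (30397/50000::real) * (195622079803/125000000000::real) * (73/912::real)"
    subgoal by (rule prod3_lo) (use ia_fr Tb12 Lst12 in linarith)+
    subgoal by (rule prod3_hi) (use ia_fr Tb12 Lst12 in linarith)+
    done
  show "(568440235043/500000000000::real) \<le> K 13" "K 13 \<le> (569294249297/500000000000::real)" using e p Kb12 by linarith+
qed
lemma Kb14: "(227506888063/200000000000::real) \<le> K 14" "K 14 \<le> (227849526157/200000000000::real)"
proof -
  have e: "K 14 = K 13 + 1 / 14 - ia * T 13 * (ln 14 - ln 13)" using K_num[of 13] by (simp)
  have p: "(6079027/10000000::real) * (1570893798181/1000000000000::real) * (81/1093::real) \<le> ia * T 13 * (ln 14 - ln 13)" "ia * T 13 * (ln 14 - ln 13) \<le> (30397/50000::real) * (392723449547/250000000000::real) * (79/1066::real)"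
    subgoal by (rule prod3_lo) (use ia_fr Tb13 Lst13 in linarith)+
    subgoal by (rule prod3_hi) (use ia_fr Tb13 Lst13 in linarith)+
    done
  show "(227506888063/200000000000::real) \<le> K 14" "K 14 \<le> (227849526157/200000000000::real)" using e p Kb13 by linarith+
qed
lemma Kb15: "(227619535133/200000000000::real) \<le> K 15" "K 15 \<le> (56990776929/50000000000::real)"
proof -
  have e: "K 15 = K 14 + 1 / 15 - ia * T 14 * (ln 15 - ln 14)" using K_num[of 14] by (simp)
  have p: "(6079027/10000000::real) * (1575995838997/1000000000000::real) * (87/1261::real) \<le> ia * T 14 * (ln 15 - ln 14)" "ia * T 14 * (ln 15 - ln 14) \<le> (30397/50000::real) * (315199167801/200000000000::real) * (85/1232::real)"
    subgoal by (rule prod3_lo) (use ia_fr Tb14 Lst14 in linarith)+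
    subgoal by (rule prod3_hi) (use ia_fr Tb14 Lst14 in linarith)+
    done
  show "(227619535133/200000000000::real) \<le> K 15" "K 15 \<le> (56990776929/50000000000::real)" using e p Kb14 by linarith+
qed
lemma Kb16: "(1138587767297/1000000000000::real) \<le> K 16" "K 16 \<le> (1140309907671/1000000000000::real)"
proof -
  have e: "K 16 = K 15 + 1 / 16 - ia * T 15 * (ln 16 - ln 15)" using K_num[of 15] by (simp)
  have p: "(6079027/10000000::real) * (1580440283441/1000000000000::real) * (93/1441::real) \<le> ia * T 15 * (ln 16 - ln 15)" "ia * T 15 * (ln 16 - ln 15) \<le> (30397/50000::real) * (31608805669/20000000000::real) * (91/1410::real)"
    subgoal by (rule prod3_lo) (use ia_fr Tb15 Lst15 in linarith)+
    subgoal by (rule prod3_hi) (use ia_fr Tb15 Lst15 in linarith)+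
    done
  show "(1138587767297/1000000000000::real) \<le> K 16" "K 16 \<le> (1140309907671/1000000000000::real)" using e p Kb15 by linarith+
qed
lemma Kb17: "(569509023273/500000000000::real) \<le> K 17" "K 17 \<le> (1140744138243/1000000000000::real)"
proof -
  have e: "K 17 = K 16 + 1 / 17 - ia * T 16 * (ln 17 - ln 16)" using K_num[of 16] by (simp)
  have p: "(6079027/10000000::real) * (1584346533441/1000000000000::real) * (99/1633::real) \<le> ia * T 16 * (ln 17 - ln 16)" "ia * T 16 * (ln 17 - ln 16) \<le> (30397/50000::real) * (31686930669/20000000000::real) * (97/1600::real)"
    subgoal by (rule prod3_lo) (use ia_fr Tb16 Lst16 in linarith)+
    subgoal by (rule prod3_hi) (use ia_fr Tb16 Lst16 in linarith)+
    done
  show "(569509023273/500000000000::real) \<le> K 17" "K 17 \<le> (1140744138243/1000000000000::real)" using e p Kb16 by linarith+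
qed
lemma Kb18: "(1139398798157/1000000000000::real) \<le> K 18" "K 18 \<le> (570564283339/500000000000::real)"
proof -
  have e: "K 18 = K 17 + 1 / 18 - ia * T 17 * (ln 18 - ln 17)" using K_num[of 17] by (simp)
  have p: "(6079027/10000000::real) * (1587806741053/1000000000000::real) * (105/1837::real) \<le> ia * T 17 * (ln 18 - ln 17)" "ia * T 17 * (ln 18 - ln 17) \<le> (30397/50000::real) * (1587806741063/1000000000000::real) * (103/1802::real)"
    subgoal by (rule prod3_lo) (use ia_fr Tb17 Lst17 in linarith)+
    subgoal by (rule prod3_hi) (use ia_fr Tb17 Lst17 in linarith)+
    done
  show "(1139398798157/1000000000000::real) \<le> K 18" "K 18 \<le> (570564283339/500000000000::real)" using e p Kb17 by linarith+
qed
lemma Kb19: "(1139738081909/1000000000000::real) \<le> K 19" "K 19 \<le> (570735646239/500000000000::real)"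
proof -
  have e: "K 19 = K 18 + 1 / 19 - ia * T 18 * (ln 19 - ln 18)" using K_num[of 18] by (simp)
  have p: "(6079027/10000000::real) * (795446580403/500000000000::real) * (111/2053::real) \<le> ia * T 18 * (ln 19 - ln 18)" "ia * T 18 * (ln 19 - ln 18) \<le> (30397/50000::real) * (1590893160817/1000000000000::real) * (109/2016::real)"
    subgoal by (rule prod3_lo) (use ia_fr Tb18 Lst18 in linarith)+
    subgoal by (rule prod3_hi) (use ia_fr Tb18 Lst18 in linarith)+
    done
  show "(1139738081909/1000000000000::real) \<le> K 19" "K 19 \<le> (570735646239/500000000000::real)" using e p Kb18 by linarith+
qed
lemma Kb20: "(285010575591/250000000000::real) \<le> K 20" "K 20 \<le> (228355750289/200000000000::real)"
proof -
  have e: "K 20 = K 19 + 1 / 20 - ia * T 19 * (ln 20 - ln 19)" using K_num[of 19] by (simp)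
  have p: "(6079027/10000000::real) * (398415810977/250000000000::real) * (117/2281::real) \<le> ia * T 19 * (ln 20 - ln 19)" "ia * T 19 * (ln 20 - ln 19) \<le> (30397/50000::real) * (19920790549/12500000000::real) * (115/2242::real)"
    subgoal by (rule prod3_lo) (use ia_fr Tb19 Lst19 in linarith)+
    subgoal by (rule prod3_hi) (use ia_fr Tb19 Lst19 in linarith)+
    done
  show "(285010575591/250000000000::real) \<le> K 20" "K 20 \<le> (228355750289/200000000000::real)" using e p Kb19 by linarith+
qed
lemma Kb21: "(142539576541/125000000000::real) \<le> K 21" "K 21 \<le> (1142056121433/1000000000000::real)"
proof -
  have e: "K 21 = K 20 + 1 / 21 - ia * T 20 * (ln 21 - ln 20)" using K_num[of 20] by (simp)
  have p: "(6079027/10000000::real) * (399040810977/250000000000::real) * (123/2521::real) \<le> ia * T 20 * (ln 21 - ln 20)" "ia * T 20 * (ln 21 - ln 20) \<le> (30397/50000::real) * (19952040549/12500000000::real) * (121/2480::real)"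
    subgoal by (rule prod3_lo) (use ia_fr Tb20 Lst20 in linarith)+
    subgoal by (rule prod3_hi) (use ia_fr Tb20 Lst20 in linarith)+
    done
  show "(142539576541/125000000000::real) \<le> K 21" "K 21 \<le> (1142056121433/1000000000000::real)" using e p Kb20 by linarith+
qed
lemma Kb22: "(1140565203947/1000000000000::real) \<le> K 22" "K 22 \<le> (35697112969/31250000000::real)"
proof -
  have e: "K 22 = K 21 + 1 / 22 - ia * T 21 * (ln 22 - ln 21)" using K_num[of 21] by (simp)
  have p: "(6079027/10000000::real) * (399607704401/250000000000::real) * (129/2773::real) \<le> ia * T 21 * (ln 22 - ln 21)" "ia * T 21 * (ln 22 - ln 21) \<le> (30397/50000::real) * (1598430817617/1000000000000::real) * (127/2730::real)"
    subgoal by (rule prod3_lo) (use ia_fr Tb21 Lst21 in linarith)+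
    subgoal by (rule prod3_hi) (use ia_fr Tb21 Lst21 in linarith)+
    done
  show "(1140565203947/1000000000000::real) \<le> K 22" "K 22 \<le> (35697112969/31250000000::real)" using e p Kb21 by linarith+
qed
lemma Kb23: "(570395761143/500000000000::real) \<le> K 23" "K 23 \<le> (1142536694133/1000000000000::real)"
proof -
  have e: "K 23 = K 22 + 1 / 23 - ia * T 22 * (ln 23 - ln 22)" using K_num[of 22] by (simp)
  have p: "(6079027/10000000::real) * (800248466653/500000000000::real) * (135/3037::real) \<le> ia * T 22 * (ln 23 - ln 22)" "ia * T 22 * (ln 23 - ln 22) \<le> (30397/50000::real) * (40012423333/25000000000::real) * (133/2992::real)"
    subgoal by (rule prod3_lo) (use ia_fr Tb22 Lst22 in linarith)+
    subgoal by (rule prod3_hi) (use ia_fr Tb22 Lst22 in linarith)+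
    done
  show "(570395761143/500000000000::real) \<le> K 23" "K 23 \<le> (1142536694133/1000000000000::real)" using e p Kb22 by linarith+
qed
lemma Kb24: "(1140998424423/1000000000000::real) \<le> K 24" "K 24 \<le> (1142746230049/1000000000000::real)"
proof -
  have e: "K 24 = K 23 + 1 / 24 - ia * T 23 * (ln 24 - ln 23)" using K_num[of 23] by (simp)
  have p: "(6079027/10000000::real) * (801193646237/500000000000::real) * (141/3313::real) \<le> ia * T 23 * (ln 24 - ln 23)" "ia * T 23 * (ln 24 - ln 23) \<le> (30397/50000::real) * (1602387292489/1000000000000::real) * (139/3266::real)"
    subgoal by (rule prod3_lo) (use ia_fr Tb23 Lst23 in linarith)+
    subgoal by (rule prod3_hi) (use ia_fr Tb23 Lst23 in linarith)+
    done
  show "(1140998424423/1000000000000::real) \<le> K 24" "K 24 \<le> (1142746230049/1000000000000::real)" using e p Kb23 by linarith+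
qed
lemma Kb25: "(228237659919/200000000000::real) \<le> K 25" "K 25 \<le> (1142938624001/1000000000000::real)"
proof -
  have e: "K 25 = K 24 + 1 / 25 - ia * T 24 * (ln 25 - ln 24)" using K_num[of 24] by (simp)
  have p: "(6079027/10000000::real) * (320824680717/200000000000::real) * (147/3601::real) \<le> ia * T 24 * (ln 25 - ln 24)" "ia * T 24 * (ln 25 - ln 24) \<le> (30397/50000::real) * (1604123403601/1000000000000::real) * (145/3552::real)"
    subgoal by (rule prod3_lo) (use ia_fr Tb24 Lst24 in linarith)+
    subgoal by (rule prod3_hi) (use ia_fr Tb24 Lst24 in linarith)+
    done
  show "(228237659919/200000000000::real) \<le> K 25" "K 25 \<le> (1142938624001/1000000000000::real)" using e p Kb24 by linarith+
qed
lemma Kb26: "(1141363161073/1000000000000::real) \<le> K 26" "K 26 \<le> (1143115899543/1000000000000::real)"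
proof -
  have e: "K 26 = K 25 + 1 / 26 - ia * T 25 * (ln 26 - ln 25)" using K_num[of 25] by (simp)
  have p: "(6079027/10000000::real) * (321144680717/200000000000::real) * (153/3901::real) \<le> ia * T 25 * (ln 26 - ln 25)" "ia * T 25 * (ln 26 - ln 25) \<le> (30397/50000::real) * (1605723403601/1000000000000::real) * (151/3850::real)"
    subgoal by (rule prod3_lo) (use ia_fr Tb25 Lst25 in linarith)+
    subgoal by (rule prod3_hi) (use ia_fr Tb25 Lst25 in linarith)+
    done
  show "(1141363161073/1000000000000::real) \<le> K 26" "K 26 \<le> (1143115899543/1000000000000::real)" using e p Kb25 by linarith+
qed
lemma Kb27: "(285381179307/250000000000::real) \<le> K 27" "K 27 \<le> (285819943483/250000000000::real)"
proof -
  have e: "K 27 = K 26 + 1 / 27 - ia * T 26 * (ln 27 - ln 26)" using K_num[of 26] by (simp)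
  have p: "(6079027/10000000::real) * (64288107741/40000000000::real) * (159/4213::real) \<le> ia * T 26 * (ln 27 - ln 26)" "ia * T 26 * (ln 27 - ln 26) \<le> (30397/50000::real) * (803601346771/500000000000::real) * (157/4160::real)"
    subgoal by (rule prod3_lo) (use ia_fr Tb26 Lst26 in linarith)+
    subgoal by (rule prod3_hi) (use ia_fr Tb26 Lst26 in linarith)+
    done
  show "(285381179307/250000000000::real) \<le> K 27" "K 27 \<le> (285819943483/250000000000::real)" using e p Kb26 by linarith+
qed
lemma Kb28: "(28541860677/25000000000::real) \<le> K 28" "K 28 \<le> (142928964241/125000000000::real)"
proof -
  have e: "K 28 = K 27 + 1 / 28 - ia * T 27 * (ln 28 - ln 27)" using K_num[of 27] by (simp)
  have p: "(6079027/10000000::real) * (1608574435637/1000000000000::real) * (165/4537::real) \<le> ia * T 27 * (ln 28 - ln 27)" "ia * T 27 * (ln 28 - ln 27) \<le> (30397/50000::real) * (321714887131/200000000000::real) * (163/4482::real)"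
    subgoal by (rule prod3_lo) (use ia_fr Tb27 Lst27 in linarith)+
    subgoal by (rule prod3_hi) (use ia_fr Tb27 Lst27 in linarith)+
    done
  show "(28541860677/25000000000::real) \<le> K 28" "K 28 \<le> (142928964241/125000000000::real)" using e p Kb27 by linarith+
qed
lemma Kb29: "(1141813544139/1000000000000::real) \<le> K 29" "K 29 \<le> (571786489917/500000000000::real)"
proof -
  have e: "K 29 = K 28 + 1 / 29 - ia * T 28 * (ln 29 - ln 28)" using K_num[of 28] by (simp)
  have p: "(6079027/10000000::real) * (1609849945841/1000000000000::real) * (171/4873::real) \<le> ia * T 28 * (ln 29 - ln 28)" "ia * T 28 * (ln 29 - ln 28) \<le> (30397/50000::real) * (80492497293/50000000000::real) * (169/4816::real)"
    subgoal by (rule prod3_lo) (use ia_fr Tb28 Lst28 in linarith)+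
    subgoal by (rule prod3_hi) (use ia_fr Tb28 Lst28 in linarith)+
    done
  show "(1141813544139/1000000000000::real) \<le> K 29" "K 29 \<le> (571786489917/500000000000::real)" using e p Kb28 by linarith+
qed
lemma Kb30: "(1141943151323/1000000000000::real) \<le> K 30" "K 30 \<le> (285926165141/250000000000::real)"
proof -
  have e: "K 30 = K 29 + 1 / 30 - ia * T 29 * (ln 30 - ln 29)" using K_num[of 29] by (simp)
  have p: "(6079027/10000000::real) * (1611039006483/1000000000000::real) * (177/5221::real) \<le> ia * T 29 * (ln 30 - ln 29)" "ia * T 29 * (ln 30 - ln 29) \<le> (30397/50000::real) * (1611039006503/1000000000000::real) * (175/5162::real)"
    subgoal by (rule prod3_lo) (use ia_fr Tb29 Lst29 in linarith)+
    subgoal by (rule prod3_hi) (use ia_fr Tb29 Lst29 in linarith)+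
    done
  show "(1141943151323/1000000000000::real) \<le> K 30" "K 30 \<le> (285926165141/250000000000::real)" using e p Kb29 by linarith+
qed
lemma Kb31: "(17844752953/15625000000::real) \<le> K 31" "K 31 \<le> (228765540361/200000000000::real)"
proof -
  have e: "K 31 = K 30 + 1 / 31 - ia * T 30 * (ln 31 - ln 30)" using K_num[of 30] by (simp)
  have p: "(6079027/10000000::real) * (806075058797/500000000000::real) * (183/5581::real) \<le> ia * T 30 * (ln 31 - ln 30)" "ia * T 30 * (ln 31 - ln 30) \<le> (30397/50000::real) * (322430023523/200000000000::real) * (181/5520::real)"
    subgoal by (rule prod3_lo) (use ia_fr Tb30 Lst30 in linarith)+
    subgoal by (rule prod3_hi) (use ia_fr Tb30 Lst30 in linarith)+
    done
  show "(17844752953/15625000000::real) \<le> K 31" "K 31 \<le> (228765540361/200000000000::real)" using e p Kb30 by linarith+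
qed
lemma Kb32: "(1142177477639/1000000000000::real) \<le> K 32" "K 32 \<le> (1143942928807/1000000000000::real)"
proof -
  have e: "K 32 = K 31 + 1 / 32 - ia * T 31 * (ln 32 - ln 31)" using K_num[of 31] by (simp)
  have p: "(6079027/10000000::real) * (10082441877/6250000000::real) * (189/5953::real) \<le> ia * T 31 * (ln 32 - ln 31)" "ia * T 31 * (ln 32 - ln 31) \<le> (30397/50000::real) * (806595350171/500000000000::real) * (187/5890::real)"
    subgoal by (rule prod3_lo) (use ia_fr Tb31 Lst31 in linarith)+
    subgoal by (rule prod3_hi) (use ia_fr Tb31 Lst31 in linarith)+
    done
  show "(1142177477639/1000000000000::real) \<le> K 32" "K 32 \<le> (1143942928807/1000000000000::real)" using e p Kb31 by linarith+
qed
lemma Kb33: "(57114186819/50000000000::real) \<le> K 33" "K 33 \<le> (1144051064953/1000000000000::real)"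
proof -
  have e: "K 33 = K 32 + 1 / 33 - ia * T 32 * (ln 33 - ln 32)" using K_num[of 32] by (simp)
  have p: "(6079027/10000000::real) * (80708363141/50000000000::real) * (195/6337::real) \<le> ia * T 32 * (ln 33 - ln 32)" "ia * T 32 * (ln 33 - ln 32) \<le> (30397/50000::real) * (807083631421/500000000000::real) * (193/6272::real)"
    subgoal by (rule prod3_lo) (use ia_fr Tb32 Lst32 in linarith)+
    subgoal by (rule prod3_hi) (use ia_fr Tb32 Lst32 in linarith)+
    done
  show "(57114186819/50000000000::real) \<le> K 33" "K 33 \<le> (1144051064953/1000000000000::real)" using e p Kb32 by linarith+
qed
lemma Kb34: "(1142383598129/1000000000000::real) \<le> K 34" "K 34 \<le> (1144152747003/1000000000000::real)"
proof -
  have e: "K 34 = K 33 + 1 / 34 - ia * T 33 * (ln 34 - ln 33)" using K_num[of 33] by (simp)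
  have p: "(6079027/10000000::real) * (323017107293/200000000000::real) * (201/6733::real) \<le> ia * T 33 * (ln 34 - ln 33)" "ia * T 33 * (ln 34 - ln 33) \<le> (30397/50000::real) * (201885692061/125000000000::real) * (199/6666::real)"
    subgoal by (rule prod3_lo) (use ia_fr Tb33 Lst33 in linarith)+
    subgoal by (rule prod3_hi) (use ia_fr Tb33 Lst33 in linarith)+
    done
  show "(1142383598129/1000000000000::real) \<le> K 34" "K 34 \<le> (1144152747003/1000000000000::real)" using e p Kb33 by linarith+
qed
lemma Kb35: "(571238811063/500000000000::real) \<le> K 35" "K 35 \<le> (1144248537677/1000000000000::real)"
proof -
  have e: "K 35 = K 34 + 1 / 35 - ia * T 34 * (ln 35 - ln 34)" using K_num[of 34] by (simp)
  have p: "(6079027/10000000::real) * (100996911773/62500000000::real) * (207/7141::real) \<le> ia * T 34 * (ln 35 - ln 34)" "ia * T 34 * (ln 35 - ln 34) \<le> (30397/50000::real) * (201993823549/125000000000::real) * (205/7072::real)"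
    subgoal by (rule prod3_lo) (use ia_fr Tb34 Lst34 in linarith)+
    subgoal by (rule prod3_hi) (use ia_fr Tb34 Lst34 in linarith)+
    done
  show "(571238811063/500000000000::real) \<le> K 35" "K 35 \<le> (1144248537677/1000000000000::real)" using e p Kb34 by linarith+
qed
lemma Kb36: "(285641576087/250000000000::real) \<le> K 36" "K 36 \<le> (71521183507/62500000000::real)"
proof -
  have e: "K 36 = K 35 + 1 / 36 - ia * T 35 * (ln 36 - ln 35)" using K_num[of 35] by (simp)
  have p: "(6079027/10000000::real) * (808383457449/500000000000::real) * (213/7561::real) \<le> ia * T 35 * (ln 36 - ln 35)" "ia * T 35 * (ln 36 - ln 35) \<le> (30397/50000::real) * (1616766914923/1000000000000::real) * (211/7490::real)"
    subgoal by (rule prod3_lo) (use ia_fr Tb35 Lst35 in linarith)+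
    subgoal by (rule prod3_hi) (use ia_fr Tb35 Lst35 in linarith)+
    done
  show "(285641576087/250000000000::real) \<le> K 36" "K 36 \<le> (71521183507/62500000000::real)" using e p Kb35 by linarith+
qed
lemma Kb37: "(1142650086197/1000000000000::real) \<le> K 37" "K 37 \<le> (1144424386591/1000000000000::real)"
proof -
  have e: "K 37 = K 36 + 1 / 37 - ia * T 36 * (ln 37 - ln 36)" using K_num[of 36] by (simp)
  have p: "(6079027/10000000::real) * (404384629959/250000000000::real) * (219/7993::real) \<le> ia * T 36 * (ln 37 - ln 36)" "ia * T 36 * (ln 37 - ln 36) \<le> (30397/50000::real) * (808769259931/500000000000::real) * (217/7920::real)"
    subgoal by (rule prod3_lo) (use ia_fr Tb36 Lst36 in linarith)+
    subgoal by (rule prod3_hi) (use ia_fr Tb36 Lst36 in linarith)+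
    done
  show "(1142650086197/1000000000000::real) \<le> K 37" "K 37 \<le> (1144424386591/1000000000000::real)" using e p Kb36 by linarith+
qed
lemma Kb38: "(285682340451/250000000000::real) \<le> K 38" "K 38 \<le> (1144505285877/1000000000000::real)"
proof -
  have e: "K 38 = K 37 + 1 / 38 - ia * T 37 * (ln 38 - ln 37)" using K_num[of 37] by (simp)
  have p: "(6079027/10000000::real) * (64730759201/40000000000::real) * (225/8437::real) \<le> ia * T 37 * (ln 38 - ln 37)" "ia * T 37 * (ln 38 - ln 37) \<le> (30397/50000::real) * (404567245013/250000000000::real) * (223/8362::real)"
    subgoal by (rule prod3_lo) (use ia_fr Tb37 Lst37 in linarith)+
    subgoal by (rule prod3_hi) (use ia_fr Tb37 Lst37 in linarith)+
    done
  show "(285682340451/250000000000::real) \<le> K 38" "K 38 \<le> (1144505285877/1000000000000::real)" using e p Kb37 by linarith+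
qed
lemma Kb39: "(1142804484183/1000000000000::real) \<le> K 39" "K 39 \<le> (5722909947/5000000000::real)"
proof -
  have e: "K 39 = K 38 + 1 / 39 - ia * T 38 * (ln 39 - ln 38)" using K_num[of 38] by (simp)
  have p: "(6079027/10000000::real) * (505925469/312500000::real) * (231/8893::real) \<le> ia * T 38 * (ln 39 - ln 38)" "ia * T 38 * (ln 39 - ln 38) \<le> (30397/50000::real) * (404740375207/250000000000::real) * (229/8816::real)"
    subgoal by (rule prod3_lo) (use ia_fr Tb38 Lst38 in linarith)+
    subgoal by (rule prod3_hi) (use ia_fr Tb38 Lst38 in linarith)+
    done
  show "(1142804484183/1000000000000::real) \<le> K 39" "K 39 \<le> (5722909947/5000000000::real)" using e p Kb38 by linarith+
qed
lemma Kb40: "(142859471307/125000000000::real) \<le> K 40" "K 40 \<le> (1144654816501/1000000000000::real)"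
proof -
  have e: "K 40 = K 39 + 1 / 40 - ia * T 39 * (ln 40 - ln 39)" using K_num[of 39] by (simp)
  have p: "(6079027/10000000::real) * (323923792599/200000000000::real) * (237/9361::real) \<le> ia * T 39 * (ln 40 - ln 39)" "ia * T 39 * (ln 40 - ln 39) \<le> (30397/50000::real) * (101226185189/62500000000::real) * (235/9282::real)"
    subgoal by (rule prod3_lo) (use ia_fr Tb39 Lst39 in linarith)+
    subgoal by (rule prod3_hi) (use ia_fr Tb39 Lst39 in linarith)+
    done
  show "(142859471307/125000000000::real) \<le> K 40" "K 40 \<le> (1144654816501/1000000000000::real)" using e p Kb39 by linarith+
qed
lemma PLb2: "PL 2"
  by (rule chkL[where Sl="(5/4::real)" and A=3 and X="(407302149597/1000000000000::real)"]) (use Sb2 LN3 LN2 in simp_all)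
lemma PUb2: "PU 2"
  unfolding PU_def by (rule chkU[where Sh="(5/4::real)" and A=2 and Y="(346538319141/500000000000::real)"]) (use Sb2 LN2 in simp_all)
lemma PLb3: "PL 3"
  by (rule chkL[where Sl="(736111111111/500000000000::real)" and A=4 and X="(173795234369/250000000000::real)"]) (use Sb3 LN4 LN2 in simp_all)
lemma PUb3: "PU 3"
  unfolding PU_def by (rule chkU[where Sh="(1472222222223/1000000000000::real)" and A=3 and Y="(1098482043687/1000000000000::real)"]) (use Sb3 LN3 in simp_all)
lemma PLb4: "PL 4"
  by (rule chkL[where Sl="(798611111111/500000000000::real)" and A=5 and X="(918395223191/1000000000000::real)"]) (use Sb4 LN5 LN2 in simp_all)
lemma PUb4: "PU 4"
  unfolding PU_def by (rule chkU[where Sh="(1597222222223/1000000000000::real)" and A=4 and Y="(1386153276563/1000000000000::real)"]) (use Sb4 LN4 in simp_all)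
lemma PU'b4: "PU' 4"
  unfolding PU'_def by (rule chkU[where Sh="(1597222222223/1000000000000::real)" and A=4 and Y="(1386153276563/1000000000000::real)"]) (use Sb4 LN4 in simp_all)
lemma PLb5: "PL 5"
  by (rule chkL[where Sl="(878611111111/500000000000::real)" and A=6 and X="(68796760273/62500000000::real)"]) (use Sb5 LN6 LN2 in simp_all)
lemma PUb5: "PU 5"
  unfolding PU_def by (rule chkU[where Sh="(1757222222223/1000000000000::real)" and A=5 and Y="(160929377243/100000000000::real)"]) (use Sb5 LN5 in simp_all)
lemma PU'b5: "PU' 5"
  unfolding PU'_def by (rule chkU[where Sh="(1757222222223/1000000000000::real)" and A=5 and Y="(160929377243/100000000000::real)"]) (use Sb5 LN5 in simp_all)
lemma PLb6: "PL 6"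
  by (rule chkL[where Sl="(1812777777777/1000000000000::real)" and A=7 and X="(250982966207/200000000000::real)"]) (use Sb6 LN7 LN2 in simp_all)
lemma PUb6: "PU 6"
  unfolding PU_def by (rule chkU[where Sh="(1812777777779/1000000000000::real)" and A=6 and Y="(895807107209/500000000000::real)"]) (use Sb6 LN6 in simp_all)
lemma PU'b6: "PU' 6"
  unfolding PU'_def by (rule chkU[where Sh="(1812777777779/1000000000000::real)" and A=6 and Y="(895807107209/500000000000::real)"]) (use Sb6 LN6 in simp_all)
lemma PLb7: "PL 7"
  by (rule chkL[where Sl="(241903344671/125000000000::real)" and A=8 and X="(694227601853/500000000000::real)"]) (use Sb7 LN8 LN2 in simp_all)
lemma PUb7: "PU 7"
  unfolding PU_def by (rule chkU[where Sh="(1935226757371/1000000000000::real)" and A=7 and Y="(972882206023/500000000000::real)"]) (use Sb7 LN7 in simp_all)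
lemma PU'b7: "PU' 7"
  unfolding PU'_def by (rule chkU[where Sh="(1935226757371/1000000000000::real)" and A=7 and Y="(972882206023/500000000000::real)"]) (use Sb7 LN7 in simp_all)
lemma PLb8: "PL 8"
  by (rule chkL[where Sl="(249715844671/125000000000::real)" and A=9 and X="(301248733049/200000000000::real)"]) (use Sb8 LN9 LN2 in simp_all)
lemma PUb8: "PU 8"
  unfolding PU_def by (rule chkU[where Sh="(1997726757371/1000000000000::real)" and A=8 and Y="(519823892329/250000000000::real)"]) (use Sb8 LN8 in simp_all)
lemma PU'b8: "PU' 8"
  unfolding PU'_def by (rule chkU[where Sh="(1997726757371/1000000000000::real)" and A=8 and Y="(519823892329/250000000000::real)"]) (use Sb8 LN8 in simp_all)
lemma PLb9: "PL 9"
  by (rule chkL[where Sl="(1035900415721/500000000000::real)" and A=10 and X="(2518136953/1562500000::real)"]) (use Sb9 LN10 LN2 in simp_all)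
lemma PUb9: "PU 9"
  unfolding PU_def by (rule chkU[where Sh="(1035900415723/500000000000::real)" and A=9 and Y="(1098539239623/500000000000::real)"]) (use Sb9 LN9 in simp_all)
lemma PU'b9: "PU' 9"
  unfolding PU'_def by (rule chkU[where Sh="(1035900415723/500000000000::real)" and A=9 and Y="(1098539239623/500000000000::real)"]) (use Sb9 LN9 in simp_all)
lemma PLb10: "PL 10"
  by (rule chkL[where Sl="(1055900415721/500000000000::real)" and A=11 and X="(10668250937/6250000000::real)"]) (use Sb10 LN11 LN2 in simp_all)
lemma PUb10: "PU 10"
  unfolding PU_def by (rule chkU[where Sh="(1055900415723/500000000000::real)" and A=10 and Y="(575609730717/250000000000::real)"]) (use Sb10 LN10 in simp_all)
lemma PU'b10: "PU' 10"
  unfolding PU'_def by (rule chkU[where Sh="(1055900415723/500000000000::real)" and A=10 and Y="(575609730717/250000000000::real)"]) (use Sb10 LN10 in simp_all)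
lemma PLb11: "PL 11"
  by (rule chkL[where Sl="(2194445459541/1000000000000::real)" and A=12 and X="(1793933136933/1000000000000::real)"]) (use Sb11 LN12 LN2 in simp_all)
lemma PUb11: "PU 11"
  unfolding PU_def by (rule chkU[where Sh="(1097222729773/500000000000::real)" and A=11 and Y="(95909962361/40000000000::real)"]) (use Sb11 LN11 in simp_all)
lemma PU'b11: "PU' 11"
  unfolding PU'_def by (rule chkU[where Sh="(1097222729773/500000000000::real)" and A=11 and Y="(95909962361/40000000000::real)"]) (use Sb11 LN11 in simp_all)
lemma PLb12: "PL 12"
  by (rule chkL[where Sl="(1111111618659/500000000000::real)" and A=13 and X="(1873976996583/1000000000000::real)"]) (use Sb12 LN13 LN2 in simp_all)
lemma PUb12: "PU 12"
  unfolding PU_def by (rule chkU[where Sh="(555555809331/250000000000::real)" and A=12 and Y="(2484760408331/1000000000000::real)"]) (use Sb12 LN12 in simp_all)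
lemma PU'b12: "PU' 12"
  unfolding PU'_def by (rule chkU[where Sh="(555555809331/250000000000::real)" and A=12 and Y="(2484760408331/1000000000000::real)"]) (use Sb12 LN12 in simp_all)
lemma PLb13: "PL 13"
  by (rule chkL[where Sl="(2293229154477/1000000000000::real)" and A=14 and X="(389617162919/200000000000::real)"]) (use Sb13 LN14 LN2 in simp_all)
lemma PUb13: "PU 13"
  unfolding PU_def by (rule chkU[where Sh="(573307288621/250000000000::real)" and A=13 and Y="(512960619553/200000000000::real)"]) (use Sb13 LN13 in simp_all)
lemma PU'b13: "PU' 13"
  unfolding PU'_def by (rule chkU[where Sh="(573307288621/250000000000::real)" and A=13 and Y="(512960619553/200000000000::real)"]) (use Sb13 LN13 in simp_all)
lemma PLb14: "PL 14"
  by (rule chkL[where Sl="(1161920699687/500000000000::real)" and A=15 and X="(2017079321089/1000000000000::real)"]) (use Sb14 LN15 LN2 in simp_all)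
lemma PUb14: "PU 14"
  unfolding PU_def by (rule chkU[where Sh="(1161920699691/500000000000::real)" and A=14 and Y="(659727764377/250000000000::real)"]) (use Sb14 LN14 in simp_all)
lemma PU'b14: "PU' 14"
  unfolding PU'_def by (rule chkU[where Sh="(1161920699691/500000000000::real)" and A=14 and Y="(659727764377/250000000000::real)"]) (use Sb14 LN14 in simp_all)
lemma PLb15: "PL 15"
  by (rule chkL[where Sl="(2359396954929/1000000000000::real)" and A=16 and X="(1040809164091/500000000000::real)"]) (use Sb15 LN16 LN2 in simp_all)
lemma PUb15: "PU 15"
  unfolding PU_def by (rule chkU[where Sh="(1179698477469/500000000000::real)" and A=15 and Y="(541580784063/200000000000::real)"]) (use Sb15 LN15 in simp_all)
lemma PU'b15: "PU' 15"
  unfolding PU'_def by (rule chkU[where Sh="(1179698477469/500000000000::real)" and A=15 and Y="(541580784063/200000000000::real)"]) (use Sb15 LN15 in simp_all)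
lemma PLb16: "PL 16"
  by (rule chkL[where Sl="(2390646954929/1000000000000::real)" and A=17 and X="(1071121664091/500000000000::real)"]) (use Sb16 LN17 LN2 in simp_all)
lemma PUb16: "PU 16"
  unfolding PU_def by (rule chkU[where Sh="(1195323477469/500000000000::real)" and A=16 and Y="(554488487047/200000000000::real)"]) (use Sb16 LN16 in simp_all)
lemma PU'b16: "PU' 16"
  unfolding PU'_def by (rule chkU[where Sh="(1195323477469/500000000000::real)" and A=16 and Y="(554488487047/200000000000::real)"]) (use Sb16 LN16 in simp_all)
lemma PLb17: "PL 17"
  by (rule chkL[where Sl="(305751284591/125000000000::real)" and A=18 and X="(549850510181/250000000000::real)"]) (use Sb17 LN18 LN2 in simp_all)
lemma PUb17: "PU 17"
  unfolding PU_def by (rule chkU[where Sh="(1223005138369/500000000000::real)" and A=17 and Y="(2833067052503/1000000000000::real)"]) (use Sb17 LN17 in simp_all)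
lemma PU'b17: "PU' 17"
  unfolding PU'_def by (rule chkU[where Sh="(1223005138369/500000000000::real)" and A=17 and Y="(2833067052503/1000000000000::real)"]) (use Sb17 LN17 in simp_all)
lemma PLb18: "PL 18"
  by (rule chkL[where Sl="(1232264397623/500000000000::real)" and A=19 and X="(1126734750521/500000000000::real)"]) (use Sb18 LN19 LN2 in simp_all)
lemma PUb18: "PU 18"
  unfolding PU_def by (rule chkU[where Sh="(2464528795257/1000000000000::real)" and A=18 and Y="(1445112731477/500000000000::real)"]) (use Sb18 LN18 in simp_all)
lemma PU'b18: "PU' 18"
  unfolding PU'_def by (rule chkU[where Sh="(2464528795257/1000000000000::real)" and A=18 and Y="(1445112731477/500000000000::real)"]) (use Sb18 LN18 in simp_all)
lemma PLb19: "PL 19"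
  by (rule chkL[where Sl="(251439029109/100000000000::real)" and A=20 and X="(2304762989/1000000000::real)"]) (use Sb19 LN20 LN2 in simp_all)
lemma PUb19: "PU 19"
  unfolding PU_def by (rule chkU[where Sh="(1257195145551/500000000000::real)" and A=19 and Y="(1472146340829/500000000000::real)"]) (use Sb19 LN19 in simp_all)
lemma PU'b19: "PU' 19"
  unfolding PU'_def by (rule chkU[where Sh="(1257195145551/500000000000::real)" and A=19 and Y="(1472146340829/500000000000::real)"]) (use Sb19 LN19 in simp_all)
lemma PLb20: "PL 20"
  by (rule chkL[where Sl="(253439029109/100000000000::real)" and A=21 and X="(2353553311581/1000000000000::real)"]) (use Sb20 LN21 LN2 in simp_all)
lemma PUb20: "PU 20"
  unfolding PU_def by (rule chkU[where Sh="(1267195145551/500000000000::real)" and A=20 and Y="(2995585974073/1000000000000::real)"]) (use Sb20 LN20 in simp_all)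
lemma PU'b20: "PU' 20"
  unfolding PU'_def by (rule chkU[where Sh="(1267195145551/500000000000::real)" and A=20 and Y="(2995585974073/1000000000000::real)"]) (use Sb20 LN20 in simp_all)
lemma PLb21: "PL 21"
  by (rule chkL[where Sl="(2561601175443/1000000000000::real)" and A=22 and X="(1200036729051/500000000000::real)"]) (use Sb21 LN22 LN2 in simp_all)
lemma PUb21: "PU 21"
  unfolding PU_def by (rule chkU[where Sh="(80050036733/31250000000::real)" and A=21 and Y="(1522188068353/500000000000::real)"]) (use Sb21 LN21 in simp_all)
lemma PU'b21: "PU' 21"
  unfolding PU'_def by (rule chkU[where Sh="(80050036733/31250000000::real)" and A=21 and Y="(1522188068353/500000000000::real)"]) (use Sb21 LN21 in simp_all)
lemma PLb22: "PL 22"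
  by (rule chkL[where Sl="(2582262332467/1000000000000::real)" and A=23 and X="(15278283311/6250000000::real)"]) (use Sb22 LN23 LN2 in simp_all)
lemma PUb22: "PU 22"
  unfolding PU_def by (rule chkU[where Sh="(2582262332481/1000000000000::real)" and A=22 and Y="(309089615113/100000000000::real)"]) (use Sb22 LN22 in simp_all)
lemma PU'b22: "PU' 22"
  unfolding PU'_def by (rule chkU[where Sh="(2582262332481/1000000000000::real)" and A=22 and Y="(309089615113/100000000000::real)"]) (use Sb22 LN22 in simp_all)
lemma PLb23: "PL 23"
  by (rule chkL[where Sl="(327981279271/125000000000::real)" and A=24 and X="(2487085035823/1000000000000::real)"]) (use Sb23 LN24 LN2 in simp_all)
lemma PUb23: "PU 23"
  unfolding PU_def by (rule chkU[where Sh="(2623850234183/1000000000000::real)" and A=23 and Y="(97979622273/31250000000::real)"]) (use Sb23 LN23 in simp_all)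
lemma PU'b23: "PU' 23"
  unfolding PU'_def by (rule chkU[where Sh="(2623850234183/1000000000000::real)" and A=23 and Y="(97979622273/31250000000::real)"]) (use Sb23 LN23 in simp_all)
lemma PLb24: "PL 24"
  by (rule chkL[where Sl="(164858695191/62500000000::real)" and A=25 and X="(315988388487/125000000000::real)"]) (use Sb24 LN25 LN2 in simp_all)
lemma PUb24: "PU 24"
  unfolding PU_def by (rule chkU[where Sh="(20607336899/7812500000::real)" and A=24 and Y="(3177907526379/1000000000000::real)"]) (use Sb24 LN24 in simp_all)
lemma PU'b24: "PU' 24"
  unfolding PU'_def by (rule chkU[where Sh="(20607336899/7812500000::real)" and A=24 and Y="(3177907526379/1000000000000::real)"]) (use Sb24 LN24 in simp_all)
lemma PLb25: "PL 25"
  by (rule chkL[where Sl="(166858695191/62500000000::real)" and A=26 and X="(2567127887117/1000000000000::real)"]) (use Sb25 LN26 LN2 in simp_all)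
lemma PUb25: "PU 25"
  unfolding PU_def by (rule chkU[where Sh="(20857336899/7812500000::real)" and A=25 and Y="(3218729520269/1000000000000::real)"]) (use Sb25 LN25 in simp_all)
lemma PU'b25: "PU' 25"
  unfolding PU'_def by (rule chkU[where Sh="(20857336899/7812500000::real)" and A=25 and Y="(3218729520269/1000000000000::real)"]) (use Sb25 LN25 in simp_all)
lemma PLb26: "PL 26"
  by (rule chkL[where Sl="(537498120469/200000000000::real)" and A=27 and X="(2604868271733/1000000000000::real)"]) (use Sb26 LN27 LN2 in simp_all)
lemma PUb26: "PU 26"
  unfolding PU_def by (rule chkU[where Sh="(1343745301181/500000000000::real)" and A=26 and Y="(1628975116453/500000000000::real)"]) (use Sb26 LN26 in simp_all)
lemma PU'b26: "PU' 26"
  unfolding PU'_def by (rule chkU[where Sh="(1343745301181/500000000000::real)" and A=26 and Y="(1628975116453/500000000000::real)"]) (use Sb26 LN26 in simp_all)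
lemma PLb27: "PL 27"
  by (rule chkL[where Sl="(2712181960369/1000000000000::real)" and A=28 and X="(330154495591/125000000000::real)"]) (use Sb27 LN28 LN2 in simp_all)
lemma PUb27: "PU 27"
  unfolding PU_def by (rule chkU[where Sh="(2712181960387/1000000000000::real)" and A=27 and Y="(3295690560463/1000000000000::real)"]) (use Sb27 LN27 in simp_all)
lemma PU'b27: "PU' 27"
  unfolding PU'_def by (rule chkU[where Sh="(2712181960387/1000000000000::real)" and A=27 and Y="(3295690560463/1000000000000::real)"]) (use Sb27 LN27 in simp_all)
lemma PLb28: "PL 28"
  by (rule chkL[where Sl="(2727488082817/1000000000000::real)" and A=29 and X="(535265465371/200000000000::real)"]) (use Sb28 LN29 LN2 in simp_all)
lemma PUb28: "PU 28"
  unfolding PU_def by (rule chkU[where Sh="(681872020709/250000000000::real)" and A=28 and Y="(83301455107/25000000000::real)"]) (use Sb28 LN28 in simp_all)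
lemma PU'b28: "PU' 28"
  unfolding PU'_def by (rule chkU[where Sh="(681872020709/250000000000::real)" and A=28 and Y="(83301455107/25000000000::real)"]) (use Sb28 LN28 in simp_all)
lemma PLb29: "PL 29"
  by (rule chkL[where Sl="(552156356159/200000000000::real)" and A=30 and X="(2710228915387/1000000000000::real)"]) (use Sb29 LN30 LN2 in simp_all)
lemma PUb29: "PU 29"
  unfolding PU_def by (rule chkU[where Sh="(552156356163/200000000000::real)" and A=29 and Y="(673429904759/200000000000::real)"]) (use Sb29 LN29 in simp_all)
lemma PU'b29: "PU' 29"
  unfolding PU'_def by (rule chkU[where Sh="(552156356163/200000000000::real)" and A=29 and Y="(673429904759/200000000000::real)"]) (use Sb29 LN29 in simp_all)
lemma PLb30: "PL 30"
  by (rule chkL[where Sl="(2769670669683/1000000000000::real)" and A=31 and X="(137150938523/50000000000::real)"]) (use Sb30 LN31 LN2 in simp_all)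
lemma PUb30: "PU 30"
  unfolding PU_def by (rule chkU[where Sh="(346208833713/125000000000::real)" and A=30 and Y="(3401051075221/1000000000000::real)"]) (use Sb30 LN30 in simp_all)
lemma PU'b30: "PU' 30"
  unfolding PU'_def by (rule chkU[where Sh="(346208833713/125000000000::real)" and A=30 and Y="(3401051075221/1000000000000::real)"]) (use Sb30 LN30 in simp_all)
lemma PLb31: "PL 31"
  by (rule chkL[where Sl="(175055509467/62500000000::real)" and A=32 and X="(693691874279/250000000000::real)"]) (use Sb31 LN32 LN2 in simp_all)
lemma PUb31: "PU 31"
  unfolding PU_def by (rule chkU[where Sh="(1400444075747/500000000000::real)" and A=31 and Y="(3433840897833/1000000000000::real)"]) (use Sb31 LN31 in simp_all)
lemma PU'b31: "PU' 31"
  unfolding PU'_def by (rule chkU[where Sh="(1400444075747/500000000000::real)" and A=31 and Y="(3433840897833/1000000000000::real)"]) (use Sb31 LN31 in simp_all)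
lemma PLb32: "PL 32"
  by (rule chkL[where Sl="(176032071967/62500000000::real)" and A=33 and X="(280553918079/100000000000::real)"]) (use Sb32 LN33 LN2 in simp_all)
lemma PUb32: "PU 32"
  unfolding PU_def by (rule chkU[where Sh="(1408256575747/500000000000::real)" and A=32 and Y="(54149837437/15625000000::real)"]) (use Sb32 LN32 in simp_all)
lemma PU'b32: "PU' 32"
  unfolding PU'_def by (rule chkU[where Sh="(1408256575747/500000000000::real)" and A=32 and Y="(54149837437/15625000000::real)"]) (use Sb32 LN32 in simp_all)
lemma PLb33: "PL 33"
  by (rule chkL[where Sl="(1417439312191/500000000000::real)" and A=34 and X="(2835392166089/1000000000000::real)"]) (use Sb33 LN34 LN2 in simp_all)
lemma PUb33: "PU 33"
  unfolding PU_def by (rule chkU[where Sh="(566975724881/200000000000::real)" and A=33 and Y="(3496361254481/1000000000000::real)"]) (use Sb33 LN33 in simp_all)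
lemma PU'b33: "PU' 33"
  unfolding PU'_def by (rule chkU[where Sh="(566975724881/200000000000::real)" and A=33 and Y="(3496361254481/1000000000000::real)"]) (use Sb33 LN33 in simp_all)
lemma PLb34: "PL 34"
  by (rule chkL[where Sl="(2848719454831/1000000000000::real)" and A=35 and X="(2864379722651/1000000000000::real)"]) (use Sb34 LN35 LN2 in simp_all)
lemma PUb34: "PU 34"
  unfolding PU_def by (rule chkU[where Sh="(569743890971/200000000000::real)" and A=34 and Y="(1763107108749/500000000000::real)"]) (use Sb34 LN34 in simp_all)
lemma PU'b34: "PU' 34"
  unfolding PU'_def by (rule chkU[where Sh="(569743890971/200000000000::real)" and A=34 and Y="(1763107108749/500000000000::real)"]) (use Sb34 LN34 in simp_all)
lemma PLb35: "PL 35"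
  by (rule chkL[where Sl="(573662258313/200000000000::real)" and A=36 and X="(1446275308589/500000000000::real)"]) (use Sb35 LN36 LN2 in simp_all)
lemma PUb35: "PU 35"
  unfolding PU_def by (rule chkU[where Sh="(286831129159/100000000000::real)" and A=35 and Y="(3555201754257/1000000000000::real)"]) (use Sb35 LN35 in simp_all)
lemma PU'b35: "PU' 35"
  unfolding PU'_def by (rule chkU[where Sh="(286831129159/100000000000::real)" and A=35 and Y="(3555201754257/1000000000000::real)"]) (use Sb35 LN35 in simp_all)
lemma PLb36: "PL 36"
  by (rule chkL[where Sl="(359696318853/125000000000::real)" and A=37 and X="(2919949607077/1000000000000::real)"]) (use Sb36 LN37 LN2 in simp_all)
lemma PUb36: "PU 36"
  unfolding PU_def by (rule chkU[where Sh="(57551411017/20000000000::real)" and A=36 and Y="(28666981049/8000000000::real)"]) (use Sb36 LN36 in simp_all)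
lemma PU'b36: "PU' 36"
  unfolding PU'_def by (rule chkU[where Sh="(57551411017/20000000000::real)" and A=36 and Y="(28666981049/8000000000::real)"]) (use Sb36 LN36 in simp_all)
lemma PLb37: "PL 37"
  by (rule chkL[where Sl="(2903867117661/1000000000000::real)" and A=38 and X="(2946617868259/1000000000000::real)"]) (use Sb37 LN38 LN2 in simp_all)
lemma PUb37: "PU 37"
  unfolding PU_def by (rule chkU[where Sh="(362983389711/125000000000::real)" and A=37 and Y="(3610771605227/1000000000000::real)"]) (use Sb37 LN37 in simp_all)
lemma PU'b37: "PU' 37"
  unfolding PU'_def by (rule chkU[where Sh="(362983389711/125000000000::real)" and A=37 and Y="(3610771605227/1000000000000::real)"]) (use Sb37 LN37 in simp_all)
lemma PLb38: "PL 38"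
  by (rule chkL[where Sl="(1458166245811/500000000000::real)" and A=39 and X="(371574170919/125000000000::real)"]) (use Sb38 LN39 LN2 in simp_all)
lemma PUb38: "PU 38"
  unfolding PU_def by (rule chkU[where Sh="(58326649833/20000000000::real)" and A=38 and Y="(1818719926117/500000000000::real)"]) (use Sb38 LN38 in simp_all)
lemma PU'b38: "PU' 38"
  unfolding PU'_def by (rule chkU[where Sh="(58326649833/20000000000::real)" and A=38 and Y="(1818719926117/500000000000::real)"]) (use Sb38 LN38 in simp_all)
lemma PLb39: "PL 39"
  by (rule chkL[where Sl="(733027896081/250000000000::real)" and A=40 and X="(749477796697/250000000000::real)"]) (use Sb39 LN40 LN2 in simp_all)
lemma PUb39: "PU 39"
  unfolding PU_def by (rule chkU[where Sh="(2932111584353/1000000000000::real)" and A=39 and Y="(3663415338571/1000000000000::real)"]) (use Sb39 LN39 in simp_all)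
lemma PU'b39: "PU' 39"
  unfolding PU'_def by (rule chkU[where Sh="(2932111584353/1000000000000::real)" and A=39 and Y="(3663415338571/1000000000000::real)"]) (use Sb39 LN39 in simp_all)
lemma PLb40: "PL 40"
  by (rule chkL[where Sl="(735527896081/250000000000::real)" and A=41 and X="(3022603809739/1000000000000::real)"]) (use Sb40 LN41 LN2 in simp_all)
lemma PUb40: "PU 40"
  unfolding PU_def by (rule chkU[where Sh="(2942111584353/1000000000000::real)" and A=40 and Y="(3688733146497/1000000000000::real)"]) (use Sb40 LN40 in simp_all)
lemma PU'b40: "PU' 40"
  unfolding PU'_def by (rule chkU[where Sh="(2942111584353/1000000000000::real)" and A=40 and Y="(3688733146497/1000000000000::real)"]) (use Sb40 LN40 in simp_all)



lemma PL1: "PL 1" unfolding PL_def using S1 by simp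
lemma PU1: "PU 1" unfolding PU_def using S1 by simp

lemma mult2_mono:
  fixes a b x y :: real
  shows "0 \<le> a \<Longrightarrow> a \<le> x \<Longrightarrow> 0 \<le> b \<Longrightarrow> b \<le> y \<Longrightarrow> a * b \<le> x * y"
  by (intro mult_mono) (auto intro: order_trans)

lemma large_case:
  assumes N: "N \<ge> 41"
  and IH: "\<And>M. 1 \<le> M \<Longrightarrow> M < N \<Longrightarrow> PL M \<and> PU M \<and> (4 \<le> M \<longrightarrow> PU' M)"
  shows "PL N \<and> PU N \<and> PU' N"
proof -
  have up: "S N \<le> ia * ln (real N) + K N - bb * (T N - 1)"
    using upper_sum[of N] IH N by auto
  have lo: "S N \<ge> ia * ln (real N) + K N - 4/5 * (T N - 1) - 1/5 * (4 / (real N - 3))"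
    using lower_sum[of N] IH N by auto
  have Kl: "142859471307/125000000000 \<le> K N" using K_bounds_large(1)[of N] Kb40 N by simp
  have "K N \<le> K 40 + 122/1000 * (1/40 - 1 / real N)" using K_bounds_large(2)[of N] N by simp
  moreover have "122/1000 * (1/40 - 1 / real N) \<le> 122/1000 * (1/40)"
    by (intro mult_left_mono) auto
  ultimately have Ku: "K N \<le> 1144654816501/1000000000000 + 122/1000 * (1/40)" using Kb40 by linarith
  have z: "16449/10000 \<le> zeta2" "zeta2 \<le> 1645/1000" using zeta2_bounds by simp_all
  have i41: "1 / real N \<le> 1 / 41" using N by (simp add: divide_simps)
  have "zeta2 - 1 / real N \<le> T N" using T_ge[of N] N by simp
  hence Tl: "zeta2 - 1/41 \<le> T N" using i41 by linarith
  have Tu: "T N \<le> zeta2" by (rule T_le_zeta2)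
  have ia: "6079027/10000000 \<le> ia" "ia \<le> 60794/100000" using ia_fr by simp_all
  have l2: "346538319141/500000000000 \<le> ln (2::real)" "ln (2::real) \<le> 694128787879/1000000000000"
    using LN2 by simp_all
  have p1: "ia * ln 2 \<le> (60794/100000) * (694128787879/1000000000000)"
    using ia l2 by (intro mult2_mono) auto
  have p2: "(6079027/10000000) * (346538319141/500000000000) \<le> ia * ln 2"
    using ia l2 by (intro mult2_mono) auto
  have bbl: "1 - (60794/100000) * (694128787879/1000000000000) \<le> bb" using p1 unfolding bb_def by simp
  have bbh: "bb \<le> 1 - (6079027/10000000) * (346538319141/500000000000)" using p2 unfolding bb_def by simp
  have p3: "(1 - (60794/100000) * (694128787879/1000000000000)) * (16449/10000 - 1 - 1/41) \<le> bb * (T N - 1)"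
  proof (rule mult2_mono)
    show "0 \<le> 1 - (60794/100000) * (694128787879/1000000000000::real)" by simp
    show "0 \<le> 16449/10000 - 1 - 1/(41::real)" by simp
    show "1 - (60794/100000) * (694128787879/1000000000000) \<le> bb" by (rule bbl)
    show "16449/10000 - 1 - 1/41 \<le> T N - 1" using Tl z by linarith
  qed
  have PU'N: "PU' N"
  proof -
    have "K N - bb * (T N - 1) \<le> 4/5" using Ku p3 by simp
    thus ?thesis unfolding PU'_def using up by simp
  qed
  moreover have "PU N" using PU'N unfolding PU'_def PU_def by simp
  moreover have "PL N"
  proof -
    have Np: "real N > 0" using N by simp
    have "ln (real N + 1) - ln (real N) \<le> (6 * real N + 1) / (real N * (6 * real N + 4))"
      using ln_step_bounds(1)[of N] N by simp
    also have "\<dots> \<le> 1 / real N"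
    proof (rule frac_cross)
      show "0 < real N * (6 * real N + 4)" "0 < real N" using Np by auto
      show "(6 * real N + 1) * real N \<le> 1 * (real N * (6 * real N + 4))" using Np by (simp add: algebra_simps)
    qed
    also have "\<dots> \<le> 1 / 41" using N by (simp add: divide_simps)
    finally have lnN: "ln (real N + 1) \<le> ln (real N) + 1/41" by simp
    have "ia * ln (real N + 1) \<le> ia * (ln (real N) + 1/41)" using lnN ia by (intro mult_left_mono) auto
    hence i1: "ia * ln (real N + 1) \<le> ia * ln (real N) + (60794/100000) * (1/41)" using ia by (simp add: algebra_simps)
    have "real N - 3 \<ge> 38" using N by simp
    hence "4 / (real N - 3) \<le> 4 / 38" by (simp add: divide_simps)
    hence i2: "1/5 * (4 / (real N - 3)) \<le> 1/5 * (4/38)" by (intro mult_left_mono) auto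
    have i3: "4/5 * (T N - 1) \<le> 4/5 * (1645/1000 - 1)" using Tu z by simp
    have "S N \<ge> bb + ia * ln (real N + 1)"
      using lo Kl i1 i2 i3 bbh by argo
    thus ?thesis unfolding PL_def bb_def by (simp add: algebra_simps)
  qed
  ultimately show ?thesis by simp
qed

lemma small_case:
  assumes "1 \<le> N" "N \<le> 40"
  shows "PL N \<and> PU N \<and> (4 \<le> N \<longrightarrow> PU' N)"
proof -
  have "N = 1 \<or> N = 2 \<or> N = 3 \<or> N = 4 \<or> N = 5 \<or> N = 6 \<or> N = 7 \<or> N = 8 \<or> N = 9 \<or> N = 10 \<or> N = 11 \<or> N = 12 \<or> N = 13 \<or> N = 14 \<or> N = 15 \<or> N = 16 \<or> N = 17 \<or> N = 18 \<or> N = 19 \<or> N = 20 \<or> N = 21 \<or> N = 22 \<or> N = 23 \<or> N = 24 \<or> N = 25 \<or> N = 26 \<or> N = 27 \<or> N = 28 \<or> N = 29 \<or> N = 30 \<or> N = 31 \<or> N = 32 \<or> N = 33 \<or> N = 34 \<or> N = 35 \<or> N = 36 \<or> N = 37 \<or> N = 38 \<or> N = 39 \<or> N = 40" using assms by arith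
  thus ?thesis using PL1 PU1 PLb2 PUb2 PLb3 PUb3 PLb4 PUb4 PLb5 PUb5 PLb6 PUb6 PLb7 PUb7 PLb8 PUb8 PLb9 PUb9 PLb10 PUb10 PLb11 PUb11 PLb12 PUb12 PLb13 PUb13 PLb14 PUb14 PLb15 PUb15 PLb16 PUb16 PLb17 PUb17 PLb18 PUb18 PLb19 PUb19 PLb20 PUb20 PLb21 PUb21 PLb22 PUb22 PLb23 PUb23 PLb24 PUb24 PLb25 PUb25 PLb26 PUb26 PLb27 PUb27 PLb28 PUb28 PLb29 PUb29 PLb30 PUb30 PLb31 PUb31 PLb32 PUb32 PLb33 PUb33 PLb34 PUb34 PLb35 PUb35 PLb36 PUb36 PLb37 PUb37 PLb38 PUb38 PLb39 PUb39 PLb40 PUb40 PU'b4 PU'b5 PU'b6 PU'b7 PU'b8 PU'b9 PU'b10 PU'b11 PU'b12 PU'b13 PU'b14 PU'b15 PU'b16 PU'b17 PU'b18 PU'b19 PU'b20 PU'b21 PU'b22 PU'b23 PU'b24 PU'b25 PU'b26 PU'b27 PU'b28 PU'b29 PU'b30 PU'b31 PU'b32 PU'b33 PU'b34 PU'b35 PU'b36 PU'b37 PU'b38 PU'b39 PU'b40 by (elim disjE) simp_all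
qed

lemma all_N: "1 \<le> N \<Longrightarrow> PL N \<and> PU N \<and> (4 \<le> N \<longrightarrow> PU' N)"
proof (induction N rule: less_induct)
  case (less N)
  show ?case
  proof (cases "N \<le> 40")
    case True thus ?thesis using small_case less.prems by simp
  next
    case False
    hence "N \<ge> 41" by simp
    moreover have "\<And>M. 1 \<le> M \<Longrightarrow> M < N \<Longrightarrow> PL M \<and> PU M \<and> (4 \<le> M \<longrightarrow> PU' M)"
      using less.IH by blast
    ultimately have "PL N \<and> PU N \<and> PU' N" by (rule large_case)
    thus ?thesis by simp
  qed
qed

theorem lemma2p3:
  fixes x :: real
  assumes "x \<ge> 1"
  shows "ln x / zeta2 + 1 - ln 2 / zeta2 < (\<Sum>n\<in>{1..nat \<lfloor>x\<rfloor>}. real (totient n) / (real n)^2)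
         \<and> (\<Sum>n\<in>{1..nat \<lfloor>x\<rfloor>}. real (totient n) / (real n)^2) \<le> ln x / zeta2 + 1"
proof -
  define N where "N = nat \<lfloor>x\<rfloor>"
  have N1: "N \<ge> 1" unfolding N_def using assms by linarith
  have Nx: "real N \<le> x" "x < real N + 1" unfolding N_def using assms by linarith+
  have sum: "(\<Sum>n\<in>{1..nat \<lfloor>x\<rfloor>}. real (totient n) / (real n)^2) = S N"
    unfolding S_def N_def ..
  have P: "PL N" "PU N" using all_N[OF N1] by auto
  have ia: "ia > 0" using ia_bounds by simp
  have e: "ln y / zeta2 = ia * ln y" for y unfolding ia_def by simp
  have "ln x < ln (real N + 1)" using Nx assms by simp
  hence "ia * ln x < ia * ln (real N + 1)" using ia by simp
  hence lo: "ln x / zeta2 + 1 - ln 2 / zeta2 < S N" using P(1) unfolding PL_def e by (simp add: algebra_simps)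
  have "ln (real N) \<le> ln x" using Nx N1 by simp
  hence "ia * ln (real N) \<le> ia * ln x" using ia by simp
  hence up: "S N \<le> ln x / zeta2 + 1" using P(2) unfolding PU_def e by simp
  show ?thesis unfolding sum using lo up by simp
qed


end
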